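(* Consider the multi-agent bandit setting described in the context with exactly one malicious agent ($m=1$, agent $n+1$), whose recommendation distribution $\nu_{j,i}^{(n+1)}$ is the uniform distribution over $\{1,\ldots,K\}$ for every honest agent $i\in\{1,\ldots,n\}$ and every phase $j\in\mathbb{N}$. Suppose every honest agent runs the multi-agent algorithm with inputs $\alpha>1$, $\beta>1$ and sticky sets $\hat S^{(i)}$, with no blocklist updates (so $P_j^{(i)}=\emptyset$ for all $i,j$). Assume $1\in\bigcup_{i=1}^n \hat S^{(i)}$. Then for any $\varepsilon\in(0,1)$ independent of $T$ and any $i\in\{1,\ldots,n\}$, $$\lim_{T\to\infty}\mathbb{P}\left(\frac{R_T^{(i)}}{\log T}\ge (1-\varepsilon)\,\alpha\left(1-\frac{1}{\sqrt{\alpha}}\right)^2\sum_{k=2}^K\frac{1}{\Delta_k}\right)=1,$$ and consequently $$\liminf_{T\to\infty}\frac{\mathbb{E}R_T^{(i)}}{\log T}\ge \alpha\left(1-\frac{1}{\sqrt{\alpha}}\right)^2\sum_{k=2}^K\frac{1}{\Delta_k}.$$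
   Context: Bandit: $K$ arms $1,\ldots,K$; arm $k$ yields Bernoulli$(\mu_k)$ rewards with $\mu_k\in(0,1)$, independent across agents and across pulls; $\mu_1>\mu_2\ge\cdots\ge\mu_K$, and $\Delta_k=\mu_1-\mu_k$. There are $n$ honest agents $1,\ldots,n$ and $m$ malicious agents $n+1,\ldots,n+m$, all able to communicate with each other. All random variables live on a common probability space $(\Omega,\mathcal F,\mathbb P)$. For honest agent $i$, $I_t^{(i)}$ is the arm pulled at time $t\in\mathbb N$, $T_k^{(i)}(t)$ the number of pulls of arm $k$ by $i$ during times $1,\ldots,t$, $\hat\mu_k^{(i)}(t)$ the average reward of those pulls, and the regret is $R_T^{(i)}=\sum_{t=1}^T\Delta_{I_t^{(i)}}$. Algorithm (run by each honest agent $i$) with inputs $\alpha>0$, $\beta>1$, a sticky set $\hat S^{(i)}\subset\{1,\ldots,K\}$ of size $S$: set $A_0=0$, $A_j=\lceil j^\beta\rceil$; phase $j$ consists of times $A_{j-1}+1,\ldots,A_j$. Blocklists $P_j^{(i)}\subset\{1,\ldots,n+m\}$ start empty. The initial active set is $S_1^{(i)}=\hat S^{(i)}\cup\{U_1^{(i)},L_1^{(i)}\}$ with $U_1^{(i)},L_1^{(i)}$ distinct arms not in $\hat S^{(i)}$. At each time $t$ in phase $j$, $i$ pulls $I_t^{(i)}\in\arg\max_{k\in S_j^{(i)}}\hat\mu_k^{(i)}(t-1)+\sqrt{\alpha\log(t)/T_k^{(i)}(t-1)}$. At $t=A_j$: $B_j^{(i)}\in\arg\max_{k\in S_j^{(i)}}T_k^{(i)}(A_j)-T_k^{(i)}(A_{j-1})$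 (most played active arm in phase $j$); the blocklists are updated (here: no update); then an agent $H_j^{(i)}$ is drawn uniformly at random from $\{1,\ldots,n+m\}\setminus(P_j^{(i)}\cup\{i\})$; if $H_j^{(i)}\le n$ the recommendation is $R_j^{(i)}=B_j^{(H_j^{(i)})}$, otherwise $R_j^{(i)}$ is sampled from $\nu_{j,i}^{(H_j^{(i)})}$, where each $\nu_{j,i}^{(i')}$ is an $\mathcal F$-measurable map from $\Omega$ to probability distributions on $\{1,\ldots,K\}$. If $R_j^{(i)}\in S_j^{(i)}$ then $S_{j+1}^{(i)}=S_j^{(i)}$; otherwise $U_{j+1}^{(i)}\in\arg\max_{k\in\{U_j^{(i)},L_j^{(i)}\}}T_k^{(i)}(A_j)-T_k^{(i)}(A_{j-1})$, $L_{j+1}^{(i)}=R_j^{(i)}$, and $S_{j+1}^{(i)}=\hat S^{(i)}\cup\{U_{j+1}^{(i)},L_{j+1}^{(i)}\}$ (otherwise $U,L$ are unchanged). *)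

theory Defs
  imports "HOL-Probability.Probability"
begin

text \<open>Independent random sources driving the system:
  Rew i k s : the s-th reward of arm k observed by honest agent i (value 0 or 1);
  Hsel i j  : the agent contacted by honest agent i at the end of phase j;
  Mal i j   : the sample from the malicious agent's recommendation distribution
              for honest agent i in phase j.\<close>
datatype src = Rew nat nat nat | Hsel nat nat | Mal nat nat

definition src_idx :: "nat \<Rightarrow> nat \<Rightarrow> src set" where
  "src_idx n K =
     {Rew i k s | i k s. i \<in> {1..n} \<and> k \<in> {1..K} \<and> 1 \<le> s}
   \<union> {Hsel i j | i j. i \<in> {1..n} \<and> 1 \<le> j}
   \<union> {Mal i j | i j. i \<in> {1..n} \<and> 1 \<le> j}"

definition bern01 :: "real \<Rightarrow> nat pmf" where
  "bern01 p = map_pmf (\<lambda>b. if b then 1 else 0) (bernoulli_pmf p)"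

definition phase_end :: "real \<Rightarrow> nat \<Rightarrow> nat" where
  "phase_end \<beta> j = nat \<lceil>real j powr \<beta>\<rceil>"

definition phase_of :: "real \<Rightarrow> nat \<Rightarrow> nat" where
  "phase_of \<beta> t = (LEAST j. t \<le> phase_end \<beta> j)"

definition pulls :: "(nat \<Rightarrow> nat \<Rightarrow> 'w \<Rightarrow> nat) \<Rightarrow> nat \<Rightarrow> nat \<Rightarrow> nat \<Rightarrow> 'w \<Rightarrow> nat" where
  "pulls I i k t \<omega> = card {s \<in> {1..t}. I i s \<omega> = k}"

text \<open>Empirical mean of arm k for agent i after time t (the r-th pull of arm k by
  agent i yields the reward Z (Rew i k r)).\<close>
definition muhat :: "(src \<Rightarrow> 'w \<Rightarrow> nat) \<Rightarrow> (nat \<Rightarrow> nat \<Rightarrow> 'w \<Rightarrow> nat)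
    \<Rightarrow> nat \<Rightarrow> nat \<Rightarrow> nat \<Rightarrow> 'w \<Rightarrow> real" where
  "muhat Z I i k t \<omega> =
     (\<Sum>r = 1..pulls I i k t \<omega>. real (Z (Rew i k r) \<omega>)) / real (pulls I i k t \<omega>)"

definition ucb :: "real \<Rightarrow> (src \<Rightarrow> 'w \<Rightarrow> nat) \<Rightarrow> (nat \<Rightarrow> nat \<Rightarrow> 'w \<Rightarrow> nat)
    \<Rightarrow> nat \<Rightarrow> nat \<Rightarrow> nat \<Rightarrow> 'w \<Rightarrow> ereal" where
  "ucb \<alpha> Z I i k t \<omega> =
     (if pulls I i k (t - 1) \<omega> = 0 then \<infinity>
      else ereal (muhat Z I i k (t - 1) \<omega>
                  + sqrt (\<alpha> * ln (real t) / real (pulls I i k (t - 1) \<omega>))))"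

definition phase_plays :: "real \<Rightarrow> (nat \<Rightarrow> nat \<Rightarrow> 'w \<Rightarrow> nat) \<Rightarrow> nat \<Rightarrow> nat \<Rightarrow> nat \<Rightarrow> 'w \<Rightarrow> nat" where
  "phase_plays \<beta> I i k j \<omega> =
     pulls I i k (phase_end \<beta> j) \<omega> - pulls I i k (phase_end \<beta> (j - 1)) \<omega>"

definition regret :: "(nat \<Rightarrow> real) \<Rightarrow> (nat \<Rightarrow> nat \<Rightarrow> 'w \<Rightarrow> nat) \<Rightarrow> nat \<Rightarrow> nat \<Rightarrow> 'w \<Rightarrow> real" where
  "regret \<mu> I i T \<omega> = (\<Sum>t = 1..T. \<mu> 1 - \<mu> (I i t \<omega>))"

end

theory Submission
  imports Defs "HOL-Real_Asymp.Real_Asymp"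
begin

lemma pe_ge: "real j powr \<beta> \<le> real (phase_end \<beta> j)"
  unfolding phase_end_def
  by (metis le_of_int_ceiling of_int_le_iff of_nat_nat order.trans ceiling_le_zero le_nat_iff
      powr_ge_zero nat_le_iff of_nat_0_le_iff ceiling_mono not_le order_le_less)

lemma pe_lt: "real (phase_end \<beta> j) < real j powr \<beta> + 1"
proof -
  have "0 \<le> real j powr \<beta>" by simp
  then have "-1 < real j powr \<beta>" by linarith
  then have "0 \<le> \<lceil>real j powr \<beta>\<rceil>" by simp
  then have "real (phase_end \<beta> j) = of_int \<lceil>real j powr \<beta>\<rceil>"
    unfolding phase_end_def by simp
  then show ?thesis using ceiling_correct[of "real j powr \<beta>"] by linarith
qed

lemma pe0: "phase_end \<beta> 0 = 0"
  unfolding phase_end_def using powr_zero_eq_one[of \<beta>] by (cases "\<beta> = 0") auto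

lemma powr_step:
  assumes "\<beta> \<ge> 1"
  shows "real j powr \<beta> + real (Suc j) powr (\<beta> - 1) \<le> real (Suc j) powr \<beta>"
proof (cases "j = 0")
  case True then show ?thesis by simp
next
  case False
  have a: "real j powr \<beta> = real j powr (\<beta> - 1) * real j"
    using False by (simp add: powr_diff)
  have b: "real (Suc j) powr \<beta> = real (Suc j) powr (\<beta> - 1) * real j + real (Suc j) powr (\<beta> - 1)"
  proof -
    have "real (Suc j) powr (\<beta> - 1) * real (Suc j) = real (Suc j) powr \<beta>"
      by (simp add: powr_diff del: of_nat_Suc)
    then show ?thesis by (simp add: algebra_simps)
  qed
  have "real j powr (\<beta> - 1) \<le> real (Suc j) powr (\<beta> - 1)"
    using assms by (intro powr_mono2) auto
  then have "real j powr (\<beta> - 1) * real j \<le> real (Suc j) powr (\<beta> - 1) * real j"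
    by (intro mult_right_mono) auto
  then show ?thesis using a b by linarith
qed

lemma pe_suc:
  assumes "\<beta> \<ge> 1"
  shows "phase_end \<beta> j < phase_end \<beta> (Suc j)"
proof -
  have "1 \<le> real (Suc j) powr (\<beta> - 1)" using assms by (simp add: ge_one_powr_ge_zero)
  then have "real j powr \<beta> + 1 \<le> real (Suc j) powr \<beta>" using powr_step[OF assms, of j] by linarith
  then have "real (phase_end \<beta> j) < real (phase_end \<beta> (Suc j))"
    using pe_lt[of \<beta> j] pe_ge[of "Suc j" \<beta>] by linarith
  then show ?thesis by simp
qed

lemma pe_smono: "\<beta> \<ge> 1 \<Longrightarrow> strict_mono (phase_end \<beta>)"
  by (rule strict_monoI_Suc) (rule pe_suc)

lemma pe_mono: "\<beta> \<ge> 1 \<Longrightarrow> i \<le> j \<Longrightarrow> phase_end \<beta> i \<le> phase_end \<beta> j"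
  using pe_smono strict_mono_leD by blast

lemma pe_ge_id: "\<beta> \<ge> 1 \<Longrightarrow> j \<le> phase_end \<beta> j"
  using pe_smono strict_mono_imp_increasing by blast

lemma phase_of_eq:
  assumes "\<beta> \<ge> 1" "phase_end \<beta> j < t" "t \<le> phase_end \<beta> (Suc j)"
  shows "phase_of \<beta> t = Suc j"
  unfolding phase_of_def
proof (rule Least_equality)
  show "t \<le> phase_end \<beta> (Suc j)" by fact
  fix y assume "t \<le> phase_end \<beta> y"
  show "Suc j \<le> y"
  proof (rule ccontr)
    assume "\<not> Suc j \<le> y"
    then have "phase_end \<beta> y \<le> phase_end \<beta> j" using pe_mono[OF assms(1)] by simp
    then show False using assms \<open>t \<le> phase_end \<beta> y\<close> by linarith
  qed
qed

lemma phase_of_props: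
  assumes "\<beta> \<ge> 1" "1 \<le> t"
  shows "1 \<le> phase_of \<beta> t" "t \<le> phase_end \<beta> (phase_of \<beta> t)"
    "phase_end \<beta> (phase_of \<beta> t - 1) < t"
proof -
  have ex: "t \<le> phase_end \<beta> t" using pe_ge_id[OF assms(1)] .
  show le: "t \<le> phase_end \<beta> (phase_of \<beta> t)" unfolding phase_of_def by (rule LeastI[where P="\<lambda>j. t \<le> phase_end \<beta> j", OF ex])
  show g1: "1 \<le> phase_of \<beta> t"
  proof (rule ccontr)
    assume "\<not> 1 \<le> phase_of \<beta> t"
    then have "phase_of \<beta> t = 0" by simp
    then show False using le assms pe0[of \<beta>] by simp
  qed
  have "\<not> t \<le> phase_end \<beta> (phase_of \<beta> t - 1)"
    unfolding phase_of_def
    by (rule not_less_Least) (use g1 in \<open>simp add: phase_of_def\<close>)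
  then show "phase_end \<beta> (phase_of \<beta> t - 1) < t" by simp
qed

lemma phase_of_mono: "\<beta> \<ge> 1 \<Longrightarrow> 1 \<le> s \<Longrightarrow> s \<le> t \<Longrightarrow> phase_of \<beta> s \<le> phase_of \<beta> t"
  unfolding phase_of_def
  by (metis (no_types, lifting) LeastI Least_le order.trans pe_ge_id)

lemma phase_of_tendsto: "\<beta> \<ge> 1 \<Longrightarrow> filterlim (phase_of \<beta>) at_top at_top"
  unfolding filterlim_at_top
proof
  fix Z0 assume b: "\<beta> \<ge> 1"
  show "eventually (\<lambda>t. Z0 \<le> phase_of \<beta> t) at_top"
    using eventually_ge_at_top[of "Suc (phase_end \<beta> Z0)"]
  proof eventually_elim
    case (elim t)
    then have "phase_end \<beta> Z0 < phase_end \<beta> (phase_of \<beta> t)"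
      using phase_of_props(2)[OF b, of t] by linarith
    then show ?case using pe_smono[OF b] by (meson less_imp_le strict_mono_less)
  qed
qed


lemma asym1:
  fixes \<beta> l :: real
  assumes "\<beta> > 1" "l < 1"
  shows "eventually (\<lambda>J::nat. l * (ln 2 + \<beta> * ln (real J)) \<le> \<beta> * (ln (real J) - ln 2)) at_top"
proof -
  have lim: "filterlim (\<lambda>J::nat. (1 - l) * \<beta> * ln (real J) - (l + \<beta>) * ln 2) at_top at_top"
    using assms by real_asymp
  have "eventually (\<lambda>J::nat. 0 \<le> (1 - l) * \<beta> * ln (real J) - (l + \<beta>) * ln 2) at_top"
    using lim[unfolded filterlim_at_top, rule_format, of 0] .
  then show ?thesis by eventually_elim (simp add: algebra_simps)
qed

lemma asym2:
  fixes \<beta> D D' :: real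
  assumes "\<beta> > 1"
  shows "eventually (\<lambda>J::nat. D * (ln 2 + \<beta> * ln (real J)) + D' \<le> (real J / 2) powr (\<beta> - 1) - 1) at_top"
proof -
  have lim: "filterlim (\<lambda>J::nat. (real J / 2) powr (\<beta> - 1) - 1 - D * (ln 2 + \<beta> * ln (real J)) - D') at_top at_top"
    using assms by real_asymp
  have "eventually (\<lambda>J::nat. 0 \<le> (real J / 2) powr (\<beta> - 1) - 1 - D * (ln 2 + \<beta> * ln (real J)) - D') at_top"
    using lim[unfolded filterlim_at_top, rule_format, of 0] .
  then show ?thesis by eventually_elim (simp add: algebra_simps)
qed

lemma pulls_0[simp]: "pulls I a k 0 \<omega> = 0"
  unfolding pulls_def by simp

lemma pulls_Suc: "pulls I a k (Suc t) \<omega> = pulls I a k t \<omega> + (if I a (Suc t) \<omega> = k then 1 else 0)"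
proof -
  have "{s \<in> {1..Suc t}. I a s \<omega> = k} = {s \<in> {1..t}. I a s \<omega> = k} \<union> (if I a (Suc t) \<omega> = k then {Suc t} else {})"
    by (auto simp: le_Suc_eq)
  then show ?thesis unfolding pulls_def by (auto simp: card_insert_if)
qed

lemma pulls_le: "pulls I a k t \<omega> \<le> t"
  unfolding pulls_def by (rule order.trans[OF card_mono[of "{1..t}"]]) auto

lemma pulls_mono: "s \<le> t \<Longrightarrow> pulls I a k s \<omega> \<le> pulls I a k t \<omega>"
  unfolding pulls_def by (rule card_mono) auto

lemma pulls_step: "1 \<le> t \<Longrightarrow> I a t \<omega> = k \<Longrightarrow> pulls I a k t \<omega> = Suc (pulls I a k (t - 1) \<omega>)"
  using pulls_Suc[of I a k "t - 1" \<omega>] by (cases t) auto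

lemma card_low_pulls:
  "card {s \<in> {1..T}. I a s \<omega> = k \<and> pulls I a k (s - 1) \<omega> < N} \<le> N"
proof -
  let ?A = "{s \<in> {1..T}. I a s \<omega> = k \<and> pulls I a k (s - 1) \<omega> < N}"
  have "inj_on (\<lambda>s. pulls I a k (s - 1) \<omega>) ?A"
  proof (rule inj_onI)
    fix s s' assume s: "s \<in> ?A" and s': "s' \<in> ?A" and eq: "pulls I a k (s - 1) \<omega> = pulls I a k (s' - 1) \<omega>"
    show "s = s'"
    proof (rule ccontr)
      assume "s \<noteq> s'"
      then consider "s < s'" | "s' < s" by linarith
      then show False
      proof cases
        case 1
        then have "pulls I a k s \<omega> \<le> pulls I a k (s' - 1) \<omega>" by (intro pulls_mono) auto
        moreover have "pulls I a k s \<omega> = Suc (pulls I a k (s - 1) \<omega>)" using s by (intro pulls_step) auto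
        ultimately show False using eq by simp
      next
        case 2
        then have "pulls I a k s' \<omega> \<le> pulls I a k (s - 1) \<omega>" by (intro pulls_mono) auto
        moreover have "pulls I a k s' \<omega> = Suc (pulls I a k (s' - 1) \<omega>)" using s' by (intro pulls_step) auto
        ultimately show False using eq by simp
      qed
    qed
  qed
  moreover have "(\<lambda>s. pulls I a k (s - 1) \<omega>) ` ?A \<subseteq> {..<N}" by auto
  ultimately show ?thesis using card_inj_on_le[of _ ?A "{..<N}"] by simp
qed

lemma regret_decomp:
  assumes "\<forall>t\<in>{1..T}. I a t \<omega> \<in> {1..K}"
  shows "regret \<mu> I a T \<omega> = (\<Sum>k\<in>{1..K}. (\<mu> 1 - \<mu> k) * real (pulls I a k T \<omega>))"
proof -
  have "regret \<mu> I a T \<omega> = (\<Sum>k\<in>(\<lambda>t. I a t \<omega>) ` {1..T}. \<Sum>t\<in>{t\<in>{1..T}. I a t \<omega> = k}. \<mu> 1 - \<mu> (I a t \<omega>))"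
    unfolding regret_def by (rule sum.image_gen) simp
  also have "\<dots> = (\<Sum>k\<in>(\<lambda>t. I a t \<omega>) ` {1..T}. (\<mu> 1 - \<mu> k) * real (pulls I a k T \<omega>))"
    unfolding pulls_def by (intro sum.cong refl) simp
  also have "\<dots> = (\<Sum>k\<in>{1..K}. (\<mu> 1 - \<mu> k) * real (pulls I a k T \<omega>))"
  proof (rule sum.mono_neutral_left)
    show "(\<lambda>t. I a t \<omega>) ` {1..T} \<subseteq> {1..K}" using assms by auto
    show "\<forall>k\<in>{1..K} - (\<lambda>t. I a t \<omega>) ` {1..T}. (\<mu> 1 - \<mu> k) * real (pulls I a k T \<omega>) = 0"
      unfolding pulls_def by auto
  qed simp
  finally show ?thesis .
qed


locale bandit = prob_space M for M :: "'w measure" +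
  fixes K n Ssz :: nat
    and \<mu> :: "nat \<Rightarrow> real"
    and \<alpha> \<beta> :: real
    and Shat :: "nat \<Rightarrow> nat set"
    and U1 L1 :: "nat \<Rightarrow> nat"
    and Z :: "src \<Rightarrow> 'w \<Rightarrow> nat"
    and I :: "nat \<Rightarrow> nat \<Rightarrow> 'w \<Rightarrow> nat"
    and B U L :: "nat \<Rightarrow> nat \<Rightarrow> 'w \<Rightarrow> nat"
    and i :: nat
    and S :: "nat \<Rightarrow> nat \<Rightarrow> 'w \<Rightarrow> nat set"
    and R :: "nat \<Rightarrow> nat \<Rightarrow> 'w \<Rightarrow> nat"
  assumes S_def: "S = (\<lambda>a j \<omega>. Shat a \<union> {U a j \<omega>, L a j \<omega>})"
    and R_def: "R = (\<lambda>a j \<omega>. if Z (Hsel a j) \<omega> \<le> n then B (Z (Hsel a j) \<omega>) j \<omega>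
                      else Z (Mal a j) \<omega>)"
    and K: "2 \<le> K" and n: "1 \<le> n"
    and mu_range: "\<forall>k \<in> {1..K}. 0 < \<mu> k \<and> \<mu> k < 1"
    and mu_gap: "\<mu> 1 > \<mu> 2"
    and mu_sorted: "\<forall>k. 2 \<le> k \<and> k < K \<longrightarrow> \<mu> (k + 1) \<le> \<mu> k"
    and alpha: "\<alpha> > 1" and beta: "\<beta> > 1"
    and Shat: "\<forall>a \<in> {1..n}. Shat a \<subseteq> {1..K} \<and> card (Shat a) = Ssz"
    and UL1: "\<forall>a \<in> {1..n}. U1 a \<in> {1..K} - Shat a \<and> L1 a \<in> {1..K} - Shat a \<and> U1 a \<noteq> L1 a"
    and indep: "indep_vars (\<lambda>_. count_space UNIV) Z (src_idx n K)"
    and rew_distr: "\<forall>a \<in> {1..n}. \<forall>k \<in> {1..K}. \<forall>r \<ge> 1.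
        distr M (count_space UNIV) (Z (Rew a k r)) = measure_pmf (bern01 (\<mu> k))"
    and H_distr: "\<forall>a \<in> {1..n}. \<forall>j \<ge> 1.
        distr M (count_space UNIV) (Z (Hsel a j)) = measure_pmf (pmf_of_set ({1..n+1} - {a}))"
    and mal_distr: "\<forall>a \<in> {1..n}. \<forall>j \<ge> 1.
        distr M (count_space UNIV) (Z (Mal a j)) = measure_pmf (pmf_of_set {1..K})"
    and I_meas: "\<forall>a t. I a t \<in> measurable M (count_space UNIV)"
    and I_ucb: "\<forall>a \<in> {1..n}. \<forall>t \<ge> 1. \<forall>\<omega> \<in> space M.
        I a t \<omega> \<in> S a (phase_of \<beta> t) \<omega> \<and>
        (\<forall>k \<in> S a (phase_of \<beta> t) \<omega>. ucb \<alpha> Z I a k t \<omega> \<le> ucb \<alpha> Z I a (I a t \<omega>) t \<omega>)"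
    and B_def: "\<forall>a \<in> {1..n}. \<forall>j \<ge> 1. \<forall>\<omega> \<in> space M.
        B a j \<omega> \<in> S a j \<omega> \<and>
        (\<forall>k \<in> S a j \<omega>. phase_plays \<beta> I a k j \<omega> \<le> phase_plays \<beta> I a (B a j \<omega>) j \<omega>)"
    and UL_init: "\<forall>a \<in> {1..n}. \<forall>\<omega> \<in> space M. U a 1 \<omega> = U1 a \<and> L a 1 \<omega> = L1 a"
    and UL_step: "\<forall>a \<in> {1..n}. \<forall>j \<ge> 1. \<forall>\<omega> \<in> space M.
        (R a j \<omega> \<in> S a j \<omega> \<longrightarrow> U a (j+1) \<omega> = U a j \<omega> \<and> L a (j+1) \<omega> = L a j \<omega>) \<and>
        (R a j \<omega> \<notin> S a j \<omega> \<longrightarrow>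
           U a (j+1) \<omega> \<in> {U a j \<omega>, L a j \<omega>} \<and>
           (\<forall>k \<in> {U a j \<omega>, L a j \<omega>}. phase_plays \<beta> I a k j \<omega> \<le> phase_plays \<beta> I a (U a (j+1) \<omega>) j \<omega>) \<and>
           L a (j+1) \<omega> = R a j \<omega>)"
    and i: "i \<in> {1..n}"
begin

lemma mu_le2: "k \<in> {2..K} \<Longrightarrow> \<mu> k \<le> \<mu> 2"
proof (induction k rule: nat_induct)
  case 0 then show ?case by simp
next
  case (Suc k)
  show ?case
  proof (cases "Suc k = 2")
    case True then show ?thesis by (simp add: numeral_2_eq_2)
  next
    case False
    then have "k \<in> {2..K}" "k < K" using Suc.prems by auto
    then show ?thesis using Suc.IH mu_sorted by force
  qed
qed

lemma mu_le1: "k \<in> {1..K} \<Longrightarrow> \<mu> k \<le> \<mu> 1"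
  using mu_le2[of k] mu_gap by (cases "k = 1") auto

lemma Z_meas: "s \<in> src_idx n K \<Longrightarrow> Z s \<in> measurable M (count_space UNIV)"
  using indep unfolding indep_vars_def by auto

lemma Rew_idx: "a \<in> {1..n} \<Longrightarrow> k \<in> {1..K} \<Longrightarrow> 1 \<le> r \<Longrightarrow> Rew a k r \<in> src_idx n K"
  unfolding src_idx_def by auto
lemma Hsel_idx: "a \<in> {1..n} \<Longrightarrow> 1 \<le> j \<Longrightarrow> Hsel a j \<in> src_idx n K"
  unfolding src_idx_def by auto
lemma Mal_idx: "a \<in> {1..n} \<Longrightarrow> 1 \<le> j \<Longrightarrow> Mal a j \<in> src_idx n K"
  unfolding src_idx_def by auto

lemma prob_Z_in:
  assumes "s \<in> src_idx n K" "distr M (count_space UNIV) (Z s) = measure_pmf p"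
  shows "prob {\<omega> \<in> space M. Z s \<omega> \<in> A} = measure_pmf.prob p A"
proof -
  have "prob {\<omega> \<in> space M. Z s \<omega> \<in> A} = measure (distr M (count_space UNIV) (Z s)) A"
    using Z_meas[OF assms(1)] by (subst measure_distr) (auto simp: vimage_def Int_def conj_commute)
  then show ?thesis using assms(2) by simp
qed

lemma AE_Z_in:
  assumes "s \<in> src_idx n K" "distr M (count_space UNIV) (Z s) = measure_pmf p"
  shows "AE \<omega> in M. Z s \<omega> \<in> set_pmf p"
proof -
  have "AE x in measure_pmf p. x \<in> set_pmf p" by (simp add: AE_measure_pmf)
  then have "AE x in distr M (count_space UNIV) (Z s). x \<in> set_pmf p" unfolding assms(2) .
  then show ?thesis using Z_meas[OF assms(1)] by (subst (asm) AE_distr_iff) auto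
qed

definition G :: "'w \<Rightarrow> bool" where
  "G \<omega> \<longleftrightarrow> (\<forall>a\<in>{1..n}. \<forall>j. 1 \<le> j \<longrightarrow> Z (Hsel a j) \<omega> \<in> {1..n+1} - {a} \<and> Z (Mal a j) \<omega> \<in> {1..K})"

lemma AE_G: "AE \<omega> in M. G \<omega>"
  unfolding G_def
proof (subst AE_ball_countable, simp, intro ballI, subst AE_all_countable, intro allI)
  fix a j :: nat assume a: "a \<in> {1..n}"
  show "AE \<omega> in M. 1 \<le> j \<longrightarrow> Z (Hsel a j) \<omega> \<in> {1..n+1} - {a} \<and> Z (Mal a j) \<omega> \<in> {1..K}"
  proof (cases "1 \<le> j")
    case True
    have "n+1 \<in> {1..n+1} - {a}" using a by auto
    then have fin1: "finite ({1..n+1} - {a})" "{1..n+1} - {a} \<noteq> {}"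
      by blast+
    have "AE \<omega> in M. Z (Hsel a j) \<omega> \<in> set_pmf (pmf_of_set ({1..n+1} - {a}))"
      using AE_Z_in[OF Hsel_idx[OF a True]] H_distr a True by auto
    moreover have "AE \<omega> in M. Z (Mal a j) \<omega> \<in> set_pmf (pmf_of_set {1..K})"
      using AE_Z_in[OF Mal_idx[OF a True]] mal_distr a True by auto
    ultimately show ?thesis by eventually_elim (use fin1 K in auto)
  qed simp
qed

lemma UL_range:
  assumes \<omega>: "\<omega> \<in> space M" "G \<omega>"
  shows "1 \<le> j \<Longrightarrow> \<forall>a\<in>{1..n}. U a j \<omega> \<in> {1..K} \<and> L a j \<omega> \<in> {1..K}"
proof (induction j rule: dec_induct)
  case base
  then show ?case using UL_init UL1 \<omega> by auto
next
  case (step j)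
  show ?case
  proof
    fix a assume a: "a \<in> {1..n}"
    have S_sub: "\<And>b. b \<in> {1..n} \<Longrightarrow> S b j \<omega> \<subseteq> {1..K}"
      using step.IH Shat unfolding S_def by auto
    have R: "R a j \<omega> \<in> {1..K}"
    proof (cases "Z (Hsel a j) \<omega> \<le> n")
      case True
      let ?b = "Z (Hsel a j) \<omega>"
      have "?b \<in> {1..n+1} - {a}" using \<omega>(2) a step.hyps unfolding G_def by auto
      then have b: "?b \<in> {1..n}" using True by auto
      then have "B ?b j \<omega> \<in> S ?b j \<omega>" using B_def step.hyps \<omega>(1) by auto
      then show ?thesis using True S_sub[OF b] unfolding R_def by auto
    next
      case False
      then show ?thesis using \<omega>(2) a step.hyps unfolding G_def R_def by auto
    qed
    show "U a (Suc j) \<omega> \<in> {1..K} \<and> L a (Suc j) \<omega> \<in> {1..K}"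
      using UL_step[rule_format, OF a step.hyps(1) \<omega>(1)] step.IH a R by (cases "R a j \<omega> \<in> S a j \<omega>") auto
  qed
qed

lemma I_range:
  assumes \<omega>: "\<omega> \<in> space M" "G \<omega>" and a: "a \<in> {1..n}" and t: "1 \<le> t"
  shows "I a t \<omega> \<in> {1..K}"
proof -
  have j: "1 \<le> phase_of \<beta> t" using phase_of_props(1)[of \<beta> t] beta t by simp
  have "I a t \<omega> \<in> S a (phase_of \<beta> t) \<omega>" using I_ucb a t \<omega>(1) by auto
  moreover have "Shat a \<subseteq> {1..K}" using Shat a by auto
  ultimately show ?thesis using UL_range[OF \<omega> j] a unfolding S_def by auto
qed

end

context bandit begin

definition avg :: "nat \<Rightarrow> nat \<Rightarrow> nat \<Rightarrow> 'w \<Rightarrow> real" where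
  "avg a k m \<omega> = (\<Sum>r=1..m. real (Z (Rew a k r) \<omega>)) / real m"

lemma muhat_avg: "muhat Z I a k t \<omega> = avg a k (pulls I a k t \<omega>) \<omega>"
  unfolding muhat_def avg_def by simp

lemma expect_bern: "0 \<le> p \<Longrightarrow> p \<le> 1 \<Longrightarrow> measure_pmf.expectation (bern01 p) real = p"
  unfolding bern01_def by simp

lemma set_bern: "set_pmf (bern01 p) \<subseteq> {0, 1}"
  unfolding bern01_def by auto

lemma hoeff:
  assumes a: "a \<in> {1..n}" and k: "k \<in> {1..K}" and m: "1 \<le> m" and d: "0 \<le> d"
  shows "prob {\<omega>\<in>space M. avg a k m \<omega> \<le> \<mu> k - d} \<le> exp (-2 * real m * d\<^sup>2)"
    and "prob {\<omega>\<in>space M. \<mu> k + d \<le> avg a k m \<omega>} \<le> exp (-2 * real m * d\<^sup>2)"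
proof -
  define J where "J = Rew a k ` {1..m}"
  define X where "X = (\<lambda>s \<omega>. real (Z s \<omega>))"
  define Y where "Y = X (Rew a k 1)"
  have J_idx: "J \<subseteq> src_idx n K" unfolding J_def using Rew_idx[OF a k] by auto
  have distrs: "\<And>s. s \<in> J \<Longrightarrow> distr M (count_space UNIV) (Z s) = measure_pmf (bern01 (\<mu> k))"
    unfolding J_def using rew_distr a k by auto
  have r1: "Rew a k 1 \<in> J" unfolding J_def using m by auto
  have Zm: "\<And>s. s \<in> J \<Longrightarrow> Z s \<in> measurable M (count_space UNIV)" using Z_meas J_idx by auto
  have Xm: "\<And>s. s \<in> J \<Longrightarrow> X s \<in> borel_measurable M"
    unfolding X_def using Zm by (auto intro: measurable_compose[OF _ measurable_count_space_eq1[THEN iffD2]])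
  have dX: "\<And>s. s \<in> J \<Longrightarrow> distr M borel (X s) = distr (measure_pmf (bern01 (\<mu> k))) borel real"
  proof -
    fix s assume s: "s \<in> J"
    have "distr M borel (X s) = distr (distr M (count_space UNIV) (Z s)) borel real"
      unfolding X_def using Zm[OF s] by (subst distr_distr) (auto simp: comp_def)
    then show "distr M borel (X s) = distr (measure_pmf (bern01 (\<mu> k))) borel real"
      using distrs[OF s] by simp
  qed
  have EY: "expectation Y = \<mu> k"
  proof -
    have "expectation Y = integral\<^sup>L (distr M (count_space UNIV) (Z (Rew a k 1))) real"
      unfolding Y_def X_def using Zm[OF r1] by (subst integral_distr) auto
    also have "\<dots> = \<mu> k"
    proof -
      have "0 < \<mu> k \<and> \<mu> k < 1" using mu_range k by blast
      then have mk: "0 \<le> \<mu> k" "\<mu> k \<le> 1" by auto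
      show ?thesis using distrs[OF r1] expect_bern[OF mk] by simp
    qed
    finally show ?thesis .
  qed
  have AEY: "AE x in M. Y x \<in> {0..1}"
  proof -
    have "AE \<omega> in M. Z (Rew a k 1) \<omega> \<in> set_pmf (bern01 (\<mu> k))"
      using AE_Z_in[OF _ distrs[OF r1]] J_idx r1 by auto
    then show ?thesis unfolding Y_def X_def by eventually_elim (use set_bern[of "\<mu> k"] in auto)
  qed
  interpret H: Hoeffding_ineq_iid M J X Y 0 1 "expectation Y"
  proof unfold_locales
    show "finite J" unfolding J_def by simp
    show "indep_vars (\<lambda>_. borel) X J"
      unfolding X_def
      by (rule indep_vars_compose2[OF indep_vars_subset[OF indep J_idx]]) simp
    show "\<And>s. s \<in> J \<Longrightarrow> distr M borel (X s) = distr M borel Y"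
      unfolding Y_def using dX r1 by simp
    show "random_variable borel Y" unfolding Y_def using Xm r1 by simp
    show "AE x in M. Y x \<in> {0..1}" by (fact AEY)
  qed simp
  have cardJ: "card J = m" unfolding J_def by (simp add: card_image inj_on_def)
  have sumJ: "\<And>\<omega>. (\<Sum>s\<in>J. X s \<omega>) = (\<Sum>r=1..m. real (Z (Rew a k r) \<omega>))"
    unfolding J_def X_def by (subst sum.reindex) (auto simp: inj_on_def)
  have Jne: "J \<noteq> {}" using r1 by auto
  show "prob {\<omega>\<in>space M. avg a k m \<omega> \<le> \<mu> k - d} \<le> exp (-2 * real m * d\<^sup>2)"
    using H.Hoeffding_ineq_le'[OF d _ Jne] unfolding cardJ sumJ EY avg_def by simp
  show "prob {\<omega>\<in>space M. \<mu> k + d \<le> avg a k m \<omega>} \<le> exp (-2 * real m * d\<^sup>2)"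
    using H.Hoeffding_ineq_ge'[OF d _ Jne] unfolding cardJ sumJ EY avg_def by simp
qed

end

context bandit begin

lemma prob_H: "1 \<le> j \<Longrightarrow> prob {\<omega>\<in>space M. Z (Hsel i j) \<omega> = n+1} = 1 / real n"
proof -
  assume j: "1 \<le> j"
  have "prob {\<omega>\<in>space M. Z (Hsel i j) \<omega> = n+1} = prob {\<omega>\<in>space M. Z (Hsel i j) \<omega> \<in> {n+1}}" by simp
  also have "\<dots> = measure_pmf.prob (pmf_of_set ({1..n+1} - {i})) {n+1}"
  proof -
    have "distr M (count_space UNIV) (Z (Hsel i j)) = measure_pmf (pmf_of_set ({1..n+1} - {i}))"
      using H_distr i j by auto
    from prob_Z_in[OF Hsel_idx[OF i j] this] show ?thesis .
  qed
  also have "\<dots> = 1 / real n"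
  proof -
    have ne: "{1..n+1} - {i} \<noteq> {}" using i by (metis Diff_iff atLeastAtMost_iff empty_iff le_add1 le_add_same_cancel1 n add_le_same_cancel1 not_one_le_zero order.trans singletonD)
    have c: "card ({1..n+1} - {i}) = n" using i by (simp add: card_Diff_singleton)
    have "({1..n+1} - {i}) \<inter> {n+1} = {n+1}" using i by auto
    then show ?thesis using ne c by (simp add: measure_pmf_of_set)
  qed
  finally show ?thesis .
qed

lemma prob_Mal: "1 \<le> j \<Longrightarrow> k \<in> {1..K} \<Longrightarrow> prob {\<omega>\<in>space M. Z (Mal i j) \<omega> = k} = 1 / real K"
proof -
  assume j: "1 \<le> j" and k: "k \<in> {1..K}"
  have "prob {\<omega>\<in>space M. Z (Mal i j) \<omega> = k} = prob {\<omega>\<in>space M. Z (Mal i j) \<omega> \<in> {k}}" by simp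
  also have "\<dots> = measure_pmf.prob (pmf_of_set {1..K}) {k}"
  proof -
    have "distr M (count_space UNIV) (Z (Mal i j)) = measure_pmf (pmf_of_set {1..K})"
      using mal_distr i j by auto
    from prob_Z_in[OF Mal_idx[OF i j] this] show ?thesis .
  qed
  also have "\<dots> = 1 / real K"
  proof -
    have ne: "{1..K} \<noteq> {}" using K by auto
    have "{1..K} \<inter> {k} = {k}" using k by auto
    then show ?thesis using ne by (simp add: measure_pmf_of_set)
  qed
  finally show ?thesis .
qed

lemma prob_HM: "1 \<le> j \<Longrightarrow> k \<in> {1..K} \<Longrightarrow>
  prob {\<omega>\<in>space M. Z (Hsel i j) \<omega> = n+1 \<and> Z (Mal i j) \<omega> = k} = 1 / (real n * real K)"
proof -
  assume j: "1 \<le> j" and k: "k \<in> {1..K}"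
  define A where "A = (\<lambda>s. if s = Hsel i j then {n+1} else {k})"
  have sub: "{Hsel i j, Mal i j} \<subseteq> src_idx n K" using Hsel_idx[OF i j] Mal_idx[OF i j] by auto
  have "prob (\<Inter>s\<in>{Hsel i j, Mal i j}. Z s -` A s \<inter> space M) = (\<Prod>s\<in>{Hsel i j, Mal i j}. prob (Z s -` A s \<inter> space M))"
    by (rule indep_varsD[OF indep]) (use sub in auto)
  moreover have "(\<Inter>s\<in>{Hsel i j, Mal i j}. Z s -` A s \<inter> space M) = {\<omega>\<in>space M. Z (Hsel i j) \<omega> = n+1 \<and> Z (Mal i j) \<omega> = k}"
    unfolding A_def by auto
  moreover have "Z (Hsel i j) -` A (Hsel i j) \<inter> space M = {\<omega>\<in>space M. Z (Hsel i j) \<omega> = n+1}"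
    unfolding A_def by auto
  moreover have "Z (Mal i j) -` A (Mal i j) \<inter> space M = {\<omega>\<in>space M. Z (Mal i j) \<omega> = k}"
    unfolding A_def by auto
  ultimately show ?thesis using prob_H[OF j] prob_Mal[OF j k] by simp
qed

lemma rec_prob:
  assumes k: "k \<in> {1..K}" and W: "finite W" "\<forall>j\<in>W. 1 \<le> j"
  shows "prob {\<omega>\<in>space M. \<forall>j\<in>W. \<not> (Z (Hsel i j) \<omega> = n+1 \<and> Z (Mal i j) \<omega> = k)}
           = (1 - 1 / (real n * real K)) ^ card W"
proof (cases "W = {}")
  case True
  then show ?thesis by (simp add: prob_space)
next
  case False
  define Kj where "Kj = (\<lambda>j. {Hsel i j, Mal i j})"
  define Y where "Y = (\<lambda>j \<omega>. restrict (\<lambda>s. Z s \<omega>) (Kj j))"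
  define N where "N = (\<lambda>j::nat. Pi\<^sub>M (Kj j) (\<lambda>_. count_space (UNIV :: nat set)))"
  define A where "A = (\<lambda>j. {f \<in> space (N j). \<not> (f (Hsel i j) = n+1 \<and> f (Mal i j) = k)})"
  have ind2: "indep_vars N Y W"
    unfolding N_def Y_def
  proof (rule indep_vars_restrict[OF indep])
    show "\<And>j. j \<in> W \<Longrightarrow> Kj j \<subseteq> src_idx n K"
      unfolding Kj_def using W Hsel_idx[OF i] Mal_idx[OF i] by auto
    show "disjoint_family_on Kj W" unfolding Kj_def disjoint_family_on_def by auto
  qed
  have Asets: "\<And>j. j \<in> W \<Longrightarrow> A j \<in> sets (N j)"
  proof -
    fix j assume "j \<in> W"
    have h: "Hsel i j \<in> Kj j" and m: "Mal i j \<in> Kj j" unfolding Kj_def by auto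
    show "A j \<in> sets (N j)"
      unfolding A_def N_def
      using h m by measurable
  qed
  have "prob (\<Inter>j\<in>W. Y j -` A j \<inter> space M) = (\<Prod>j\<in>W. prob (Y j -` A j \<inter> space M))"
    by (rule indep_varsD[OF ind2 False W(1) order.refl Asets])
  moreover have "(\<Inter>j\<in>W. Y j -` A j \<inter> space M) = {\<omega>\<in>space M. \<forall>j\<in>W. \<not> (Z (Hsel i j) \<omega> = n+1 \<and> Z (Mal i j) \<omega> = k)}"
    using False unfolding A_def Y_def N_def Kj_def by (auto simp: space_PiM)
  moreover have "\<And>j. j \<in> W \<Longrightarrow> prob (Y j -` A j \<inter> space M) = 1 - 1 / (real n * real K)"
  proof -
    fix j assume j: "j \<in> W"
    have "Y j -` A j \<inter> space M = space M - {\<omega>\<in>space M. Z (Hsel i j) \<omega> = n+1 \<and> Z (Mal i j) \<omega> = k}"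
      unfolding A_def Y_def N_def Kj_def by (auto simp: space_PiM)
    moreover have "{\<omega>\<in>space M. Z (Hsel i j) \<omega> = n+1 \<and> Z (Mal i j) \<omega> = k} \<in> events"
    proof -
      have j1: "1 \<le> j" using W j by auto
      note [measurable] = Z_meas[OF Hsel_idx[OF i j1]] Z_meas[OF Mal_idx[OF i j1]]
      show ?thesis by measurable
    qed
    ultimately show "prob (Y j -` A j \<inter> space M) = 1 - 1 / (real n * real K)"
      using prob_HM[of j k] W j k by (simp add: prob_compl)
  qed
  ultimately show ?thesis by simp
qed

end

context bandit begin

lemma in_S_next:
  assumes \<omega>: "\<omega> \<in> space M" and j: "1 \<le> j" and rec: "Z (Hsel i j) \<omega> = n+1" "Z (Mal i j) \<omega> = k"
  shows "k \<in> S i (Suc j) \<omega>"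
proof -
  have R: "R i j \<omega> = k" unfolding R_def using rec by simp
  show ?thesis
    using UL_step[rule_format, OF i j \<omega>] R unfolding S_def
    by (cases "R i j \<omega> \<in> Shat i \<union> {U i j \<omega>, L i j \<omega>}") auto
qed

lemma exists_good_time:
  assumes \<omega>: "\<omega> \<in> space M" "G \<omega>" and j: "1 \<le> j"
    and T: "phase_end \<beta> (Suc j) \<le> T"
    and card: "real (pulls I i k T \<omega>) + real K * real N0 < real (phase_end \<beta> (Suc j) - phase_end \<beta> j)"
  shows "\<exists>t\<in>{phase_end \<beta> j + 1 .. phase_end \<beta> (Suc j)}. I i t \<omega> \<noteq> k \<and> N0 \<le> pulls I i (I i t \<omega>) (t - 1) \<omega>"
proof (rule ccontr)
  assume neg: "\<not> ?thesis"
  let ?P = "{phase_end \<beta> j + 1 .. phase_end \<beta> (Suc j)}"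
  let ?A = "{t\<in>{1..T}. I i t \<omega> = k}"
  let ?B = "\<lambda>a. {t\<in>{1..T}. I i t \<omega> = a \<and> pulls I i a (t - 1) \<omega> < N0}"
  have sub: "?P \<subseteq> ?A \<union> (\<Union>a\<in>{1..K}. ?B a)"
  proof
    fix t assume t: "t \<in> ?P"
    then have t1: "1 \<le> t" "t \<le> T" using T by auto
    have "I i t \<omega> \<in> {1..K}" using I_range[OF \<omega> i t1(1)] .
    then show "t \<in> ?A \<union> (\<Union>a\<in>{1..K}. ?B a)" using neg t t1 by auto
  qed
  have "card ?P \<le> card (?A \<union> (\<Union>a\<in>{1..K}. ?B a))" by (rule card_mono[OF _ sub]) auto
  also have "\<dots> \<le> card ?A + card (\<Union>a\<in>{1..K}. ?B a)" by (rule card_Un_le)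
  also have "card (\<Union>a\<in>{1..K}. ?B a) \<le> (\<Sum>a\<in>{1..K}. card (?B a))" by (rule card_UN_le) simp
  also have "(\<Sum>a\<in>{1..K}. card (?B a)) \<le> (\<Sum>a\<in>{1..K}. N0)"
    by (rule sum_mono) (rule card_low_pulls)
  also have "card ?A = pulls I i k T \<omega>" unfolding pulls_def ..
  finally have "card ?P \<le> pulls I i k T \<omega> + K * N0" by simp
  moreover have "card ?P = phase_end \<beta> (Suc j) - phase_end \<beta> j" by simp
  ultimately have "real (phase_end \<beta> (Suc j) - phase_end \<beta> j) \<le> real (pulls I i k T \<omega>) + real K * real N0"
    by (metis of_nat_add of_nat_le_iff of_nat_mult)
  then show False using card by linarith
qed

lemma core:
  fixes c l \<eta> :: real
  assumes \<omega>: "\<omega> \<in> space M" "G \<omega>"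
    and k: "k \<in> {2..K}" and j: "1 \<le> j"
    and rec: "Z (Hsel i j) \<omega> = n+1" "Z (Mal i j) \<omega> = k"
    and T: "phase_end \<beta> (Suc j) \<le> T"
    and low: "\<forall>m\<in>{1..T}. \<mu> k - sqrt (ln (real T) / real m) < avg i k m \<omega>"
    and up: "\<forall>a\<in>{1..K}. \<forall>m\<in>{N0..T}. avg i a m \<omega> < \<mu> a + \<eta> / 2"
    and N0: "1 \<le> N0" "\<alpha> * ln (real T) / real N0 \<le> (\<eta> / 2)\<^sup>2"
    and lt: "\<forall>t. phase_end \<beta> j < t \<longrightarrow> l * ln (real T) \<le> ln (real t)"
    and lnT: "0 \<le> ln (real T)"
    and card: "c * ln (real T) / (\<mu> 1 - \<mu> k)\<^sup>2 + real K * real N0 < real (phase_end \<beta> (Suc j) - phase_end \<beta> j)"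
    and par: "sqrt c * ((\<mu> 1 - \<mu> k) + \<eta>) \<le> (sqrt (\<alpha> * l) - 1) * (\<mu> 1 - \<mu> k)"
      "1 < sqrt (\<alpha> * l)" "0 < c" "0 \<le> l" "0 < \<eta>"
  shows "c * ln (real T) / (\<mu> 1 - \<mu> k)\<^sup>2 \<le> real (pulls I i k T \<omega>)"
proof (rule ccontr)
  define \<Delta> where "\<Delta> = \<mu> 1 - \<mu> k"
  have \<Delta>: "0 < \<Delta>" unfolding \<Delta>_def using mu_le2[OF k] mu_gap by linarith
  assume "\<not> ?thesis"
  then have few: "real (pulls I i k T \<omega>) < c * ln (real T) / \<Delta>\<^sup>2" unfolding \<Delta>_def by simp
  obtain t where t: "t \<in> {phase_end \<beta> j + 1 .. phase_end \<beta> (Suc j)}"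
    and tk: "I i t \<omega> \<noteq> k" and tN: "N0 \<le> pulls I i (I i t \<omega>) (t - 1) \<omega>"
    using exists_good_time[OF \<omega> j T, of k N0] few card unfolding \<Delta>_def by force
  define a where "a = I i t \<omega>"
  have t1: "1 \<le> t" "t \<le> T" using t T by auto
  have ph: "phase_of \<beta> t = Suc j" using t beta by (intro phase_of_eq) auto
  have kS: "k \<in> S i (phase_of \<beta> t) \<omega>" using in_S_next[OF \<omega>(1) j rec] ph by simp
  have ucb_le: "ucb \<alpha> Z I i k t \<omega> \<le> ucb \<alpha> Z I i a t \<omega>"
    using I_ucb i t1(1) \<omega>(1) kS unfolding a_def by blast
  have aK: "a \<in> {1..K}" unfolding a_def using I_range[OF \<omega> i t1(1)] .
  define na where "na = pulls I i a (t - 1) \<omega>"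
  have na: "N0 \<le> na" "na \<le> T" using tN pulls_le[of I i a "t - 1" \<omega>] t1 unfolding na_def a_def by auto
  have na1: "1 \<le> na" using na N0 by linarith
  have lnt: "0 \<le> ln (real t)" "ln (real t) \<le> ln (real T)" using t1 by auto
  have "na \<in> {N0..T}" using na by simp
  then have "avg i a na \<omega> < \<mu> a + \<eta> / 2" using up aK by blast
  then have avga: "avg i a na \<omega> < \<mu> 1 + \<eta> / 2"
    using mu_le1[OF aK] by linarith
  have bonus_a: "sqrt (\<alpha> * ln (real t) / real na) \<le> \<eta> / 2"
  proof -
    have "\<alpha> * ln (real t) / real na \<le> \<alpha> * ln (real T) / real N0"
      using alpha lnt na na1 N0 by (intro frac_le mult_left_mono) auto
    also have "\<dots> \<le> (\<eta> / 2)\<^sup>2" by (fact N0(2))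
    finally show ?thesis using par(5) by (metis abs_of_pos half_gt_zero real_sqrt_abs real_sqrt_le_mono)
  qed
  have ucb_a: "ucb \<alpha> Z I i a t \<omega> < ereal (\<mu> 1 + \<eta>)"
    using avga bonus_a na1 unfolding ucb_def muhat_avg na_def by auto
  define nk where "nk = pulls I i k (t - 1) \<omega>"
  have nk0: "nk \<noteq> 0"
  proof
    assume "nk = 0"
    then have "ucb \<alpha> Z I i k t \<omega> = \<infinity>" unfolding ucb_def nk_def by simp
    then show False using ucb_le ucb_a by simp
  qed
  have nkT: "nk \<le> pulls I i k T \<omega>" unfolding nk_def by (rule pulls_mono) (use t1 in simp)
  have nkT2: "nk \<le> T" using nkT pulls_le[of I i k T \<omega>] by simp
  have ucb_k: "ucb \<alpha> Z I i k t \<omega> = ereal (avg i k nk \<omega> + sqrt (\<alpha> * ln (real t) / real nk))"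
    using nk0 unfolding ucb_def muhat_avg nk_def by simp
  have avgk: "\<mu> k - sqrt (ln (real T) / real nk) < avg i k nk \<omega>"
    using low nk0 nkT2 by simp
  have main: "sqrt (\<alpha> * ln (real t) / real nk) - sqrt (ln (real T) / real nk) < \<Delta> + \<eta>"
  proof -
    have "ereal (avg i k nk \<omega> + sqrt (\<alpha> * ln (real t) / real nk)) < ereal (\<mu> 1 + \<eta>)"
      using ucb_le[unfolded ucb_k] ucb_a by (rule order.strict_trans1)
    then have "avg i k nk \<omega> + sqrt (\<alpha> * ln (real t) / real nk) < \<mu> 1 + \<eta>" by simp
    then show ?thesis using avgk unfolding \<Delta>_def by linarith
  qed
  define x where "x = sqrt (ln (real T) / real nk)"
  have lt_t: "l * ln (real T) \<le> ln (real t)" using lt t by auto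
  have sx: "sqrt (\<alpha> * l) * x \<le> sqrt (\<alpha> * ln (real t) / real nk)"
  proof -
    have "sqrt (\<alpha> * l) * x = sqrt (\<alpha> * (l * ln (real T)) / real nk)"
      unfolding x_def by (simp add: real_sqrt_mult[symmetric] mult.assoc)
    also have "\<dots> \<le> sqrt (\<alpha> * ln (real t) / real nk)"
      using lt_t alpha by (intro real_sqrt_le_mono divide_right_mono mult_left_mono) auto
    finally show ?thesis .
  qed
  have xgt: "\<Delta> / sqrt c < x"
  proof -
    have "real nk < c * ln (real T) / \<Delta>\<^sup>2" using nkT few by linarith
    then have "\<Delta>\<^sup>2 * real nk < c * ln (real T)" using \<Delta> by (simp add: field_simps)
    then have "\<Delta>\<^sup>2 / c < ln (real T) / real nk" using nk0 par(3) by (simp add: field_simps)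
    then have "sqrt (\<Delta>\<^sup>2 / c) < x" unfolding x_def by (rule real_sqrt_less_mono)
    then show ?thesis using \<Delta> par(3) by (simp add: real_sqrt_divide)
  qed
  have "\<Delta> + \<eta> \<le> (sqrt (\<alpha> * l) - 1) * \<Delta> / sqrt c"
    using par(1) par(3) unfolding \<Delta>_def[symmetric] by (simp add: field_simps)
  also have "\<dots> = (sqrt (\<alpha> * l) - 1) * (\<Delta> / sqrt c)" by simp
  also have "\<dots> < (sqrt (\<alpha> * l) - 1) * x" using xgt par(2) by (intro mult_strict_left_mono) auto
  also have "\<dots> \<le> sqrt (\<alpha> * ln (real t) / real nk) - sqrt (ln (real T) / real nk)"
    using sx unfolding x_def by (simp add: algebra_simps)
  finally show False using main by simp
qed

end

lemma exp_m2ln: "1 \<le> T \<Longrightarrow> exp (-2 * ln (real T)) = 1 / (real T)\<^sup>2"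
proof -
  assume T: "1 \<le> T"
  have "exp (2 * ln (real T)) = exp (ln (real T) + ln (real T))" by (simp only: mult_2)
  also have "\<dots> = exp (ln (real T)) * exp (ln (real T))" by (rule exp_add)
  also have "\<dots> = (real T)\<^sup>2" using T by (simp add: power2_eq_square)
  finally have "exp (2 * ln (real T)) = (real T)\<^sup>2" .
  then show ?thesis by (simp add: exp_minus inverse_eq_divide)
qed

context bandit begin

lemma avg_meas: "a \<in> {1..n} \<Longrightarrow> k \<in> {1..K} \<Longrightarrow> avg a k m \<in> borel_measurable M"
proof -
  assume a: "a \<in> {1..n}" and k: "k \<in> {1..K}"
  have "\<And>r. r \<in> {1..m} \<Longrightarrow> (\<lambda>\<omega>. real (Z (Rew a k r) \<omega>)) \<in> borel_measurable M"
    using Z_meas[OF Rew_idx[OF a k]] by (auto intro: measurable_compose[OF _ measurable_count_space_eq1[THEN iffD2]])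
  then have "(\<lambda>\<omega>. \<Sum>r=1..m. real (Z (Rew a k r) \<omega>)) \<in> borel_measurable M" by (rule borel_measurable_sum)
  then show ?thesis unfolding avg_def[abs_def] by (rule borel_measurable_divide) simp
qed

lemma low_bad:
  assumes k: "k \<in> {1..K}" and T: "1 \<le> T"
  shows "prob {\<omega>\<in>space M. \<not> (\<forall>m\<in>{1..T}. \<mu> k - sqrt (ln (real T) / real m) < avg i k m \<omega>)} \<le> 1 / real T"
proof -
  note [measurable] = avg_meas[OF i k]
  let ?A = "\<lambda>m. {\<omega>\<in>space M. avg i k m \<omega> \<le> \<mu> k - sqrt (ln (real T) / real m)}"
  have eq: "{\<omega>\<in>space M. \<not> (\<forall>m\<in>{1..T}. \<mu> k - sqrt (ln (real T) / real m) < avg i k m \<omega>)} = (\<Union>m\<in>{1..T}. ?A m)"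
    by (fastforce simp: not_less)
  have Am: "\<And>m. ?A m \<in> events" by measurable
  have s1: "prob (\<Union>m\<in>{1..T}. ?A m) \<le> (\<Sum>m\<in>{1..T}. prob (?A m))"
    using Am by (intro finite_measure_subadditive_finite) auto
  have s2: "(\<Sum>m\<in>{1..T}. prob (?A m)) \<le> (\<Sum>m\<in>{1..T}. 1 / (real T)\<^sup>2)"
  proof (rule sum_mono)
    fix m assume m: "m \<in> {1..T}"
    have l0: "0 \<le> ln (real T)" using T by simp
    have h: "prob (?A m) \<le> exp (-2 * real m * (sqrt (ln (real T) / real m))\<^sup>2)"
      by (rule hoeff(1)[OF i k]) (use m l0 in auto)
    have e: "real m * (sqrt (ln (real T) / real m))\<^sup>2 = ln (real T)" using m l0 by simp
    from h have "prob (?A m) \<le> exp (-2 * ln (real T))" by (simp only: mult.assoc e)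
    also have "\<dots> = 1 / (real T)\<^sup>2" using exp_m2ln[OF T] .
    finally show "prob (?A m) \<le> 1 / (real T)\<^sup>2" .
  qed
  have "(\<Sum>m\<in>{1..T}. 1 / (real T)\<^sup>2) = real (card {1..T}) * (1 / (real T)\<^sup>2)" by (rule sum_constant)
  also have "\<dots> = 1 / real T" using T by (simp add: power2_eq_square)
  finally have s3: "(\<Sum>m\<in>{1..T}. 1 / (real T)\<^sup>2) = 1 / real T" .
  show ?thesis unfolding eq by (rule order_trans[OF s1 order_trans[OF s2 eq_refl[OF s3]]])
qed

lemma up_bad:
  fixes \<eta> :: real
  assumes a: "a \<in> {1..K}" and T: "1 \<le> T" and N0: "1 \<le> N0" "4 * \<alpha> * ln (real T) / \<eta>\<^sup>2 \<le> real N0"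
    and \<eta>: "0 < \<eta>"
  shows "prob {\<omega>\<in>space M. \<not> (\<forall>m\<in>{N0..T}. avg i a m \<omega> < \<mu> a + \<eta> / 2)} \<le> 1 / real T"
proof -
  note [measurable] = avg_meas[OF i a]
  let ?A = "\<lambda>m. {\<omega>\<in>space M. \<mu> a + \<eta> / 2 \<le> avg i a m \<omega>}"
  have eq: "{\<omega>\<in>space M. \<not> (\<forall>m\<in>{N0..T}. avg i a m \<omega> < \<mu> a + \<eta> / 2)} = (\<Union>m\<in>{N0..T}. ?A m)"
    by (fastforce simp: not_less)
  have Am: "\<And>m. ?A m \<in> events" by measurable
  have s1: "prob (\<Union>m\<in>{N0..T}. ?A m) \<le> (\<Sum>m\<in>{N0..T}. prob (?A m))"
    using Am by (intro finite_measure_subadditive_finite) auto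
  have s2: "(\<Sum>m\<in>{N0..T}. prob (?A m)) \<le> (\<Sum>m\<in>{N0..T}. 1 / (real T)\<^sup>2)"
  proof (rule sum_mono)
    fix m assume m: "m \<in> {N0..T}"
    have l0: "0 \<le> ln (real T)" using T by simp
    have "prob (?A m) \<le> exp (-2 * real m * (\<eta> / 2)\<^sup>2)"
      using hoeff(2)[OF i a, of m "\<eta> / 2"] m N0 \<eta> by auto
    also have "\<dots> \<le> exp (-2 * ln (real T))"
    proof -
      have mN: "real N0 \<le> real m" using m by simp
      have h1: "4 * \<alpha> * ln (real T) / \<eta>\<^sup>2 \<le> real m" using N0(2) mN by linarith
      have e2: "0 < \<eta>\<^sup>2" using \<eta> by simp
      have h2: "4 * \<alpha> * ln (real T) \<le> real m * \<eta>\<^sup>2" using h1 by (simp add: pos_divide_le_eq[OF e2])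
      have h3: "1 * ln (real T) \<le> \<alpha> * ln (real T)" using alpha l0 by (intro mult_right_mono) auto
      have h4: "2 * real m * (\<eta> / 2)\<^sup>2 = real m * \<eta>\<^sup>2 / 2" by (simp add: power2_eq_square)
      have "2 * ln (real T) \<le> 2 * real m * (\<eta> / 2)\<^sup>2" unfolding h4 using h2 h3 by linarith
      then show ?thesis by simp
    qed
    also have "\<dots> = 1 / (real T)\<^sup>2" using exp_m2ln[OF T] .
    finally show "prob (?A m) \<le> 1 / (real T)\<^sup>2" .
  qed
  have s3: "(\<Sum>m\<in>{N0..T}. 1 / (real T)\<^sup>2) \<le> 1 / real T"
  proof -
    have "card {N0..T} \<le> T" using N0 by simp
    then have "real (card {N0..T}) \<le> real T" by simp
    then have "real (card {N0..T}) * (1 / (real T)\<^sup>2) \<le> real T * (1 / (real T)\<^sup>2)"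
      by (intro mult_right_mono) auto
    moreover have "(\<Sum>m\<in>{N0..T}. 1 / (real T)\<^sup>2) = real (card {N0..T}) * (1 / (real T)\<^sup>2)" by (rule sum_constant)
    moreover have "real T * (1 / (real T)\<^sup>2) = 1 / real T" using T by (simp add: power2_eq_square)
    ultimately show ?thesis by linarith
  qed
  show ?thesis unfolding eq by (rule order_trans[OF s1 order_trans[OF s2 s3]])
qed

end

lemma lnT_le:
  fixes \<beta> :: real
  assumes b: "\<beta> > 1" and J: "1 \<le> J" and T: "1 \<le> T" "T \<le> phase_end \<beta> J"
  shows "ln (real T) \<le> ln 2 + \<beta> * ln (real J)"
proof -
  have Jp: "1 \<le> real J powr \<beta>" using J b by (simp add: ge_one_powr_ge_zero)
  have "real T < real J powr \<beta> + 1" using T(2) pe_lt[of \<beta> J] by linarith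
  also have "\<dots> \<le> 2 * real J powr \<beta>" using Jp by simp
  finally have "ln (real T) \<le> ln (2 * real J powr \<beta>)" using T(1) Jp J by (subst ln_le_cancel_iff) auto
  also have "\<dots> = ln 2 + \<beta> * ln (real J)" using J by (simp add: ln_mult ln_powr)
  finally show ?thesis .
qed

lemma time_lemma:
  fixes l \<beta> :: real
  assumes b: "\<beta> > 1" and l: "0 \<le> l" and J: "1 \<le> J" and j: "1 \<le> j" "J \<le> 2 * j"
    and T: "1 \<le> T" "T \<le> phase_end \<beta> J" and t: "phase_end \<beta> j < t"
    and hyp: "l * (ln 2 + \<beta> * ln (real J)) \<le> \<beta> * (ln (real J) - ln 2)"
  shows "l * ln (real T) \<le> ln (real t)"
proof -
  have Jp: "1 \<le> real J powr \<beta>" using J b by (simp add: ge_one_powr_ge_zero)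
  have "real T < real J powr \<beta> + 1" using T(2) pe_lt[of \<beta> J] by linarith
  also have "\<dots> \<le> 2 * real J powr \<beta>" using Jp by simp
  finally have "ln (real T) \<le> ln (2 * real J powr \<beta>)" using T(1) Jp J by (subst ln_le_cancel_iff) auto
  also have "\<dots> = ln 2 + \<beta> * ln (real J)" using J by (simp add: ln_mult ln_powr)
  finally have lT: "ln (real T) \<le> ln 2 + \<beta> * ln (real J)" .
  have "real J / 2 \<le> real j" using j by simp
  then have "ln (real J / 2) \<le> ln (real j)" using J by simp
  then have "\<beta> * (ln (real J) - ln 2) \<le> \<beta> * ln (real j)" using J b by (simp add: ln_div)
  also have "\<beta> * ln (real j) = ln (real j powr \<beta>)" using j by (simp add: ln_powr)
  also have "\<dots> \<le> ln (real t)"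
  proof -
    have "real j powr \<beta> \<le> real (phase_end \<beta> j)" by (rule pe_ge)
    also have "\<dots> < real t" using t by simp
    finally have lt: "real j powr \<beta> < real t" .
    have jp: "0 < real j powr \<beta>" using j by simp
    then have "0 < real t" using lt by linarith
    with jp have "ln (real j powr \<beta>) < ln (real t)" using lt by (subst ln_less_cancel_iff) auto
    then show ?thesis by simp
  qed
  finally have "\<beta> * (ln (real J) - ln 2) \<le> ln (real t)" .
  moreover have "l * ln (real T) \<le> l * (ln 2 + \<beta> * ln (real J))" using lT l by (rule mult_left_mono)
  ultimately show ?thesis using hyp by linarith
qed

lemma len_lemma:
  fixes \<beta> :: real
  assumes b: "\<beta> > 1" and j: "real J / 2 \<le> real (Suc j)"
  shows "(real J / 2) powr (\<beta> - 1) - 1 \<le> real (phase_end \<beta> (Suc j) - phase_end \<beta> j)"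
proof -
  have le: "phase_end \<beta> j \<le> phase_end \<beta> (Suc j)" using pe_suc[of \<beta> j] b by simp
  have "(real J / 2) powr (\<beta> - 1) \<le> real (Suc j) powr (\<beta> - 1)"
    using j b by (intro powr_mono2) auto
  also have "\<dots> \<le> real (Suc j) powr \<beta> - real j powr \<beta>" using powr_step[of \<beta> j] b by simp
  also have "\<dots> \<le> real (phase_end \<beta> (Suc j)) - (real (phase_end \<beta> j) - 1)"
    using pe_ge[of "Suc j" \<beta>] pe_lt[of \<beta> j] by linarith
  finally show ?thesis using le by (simp add: of_nat_diff)
qed


lemma params:
  fixes \<alpha> \<epsilon> D2 :: real
  assumes a: "\<alpha> > 1" and e: "0 < \<epsilon>" "\<epsilon> < 1" and D2: "0 < D2"
  defines "c \<equiv> (1 - \<epsilon>) * \<alpha> * (1 - 1 / sqrt \<alpha>)\<^sup>2"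
  shows "\<exists>l \<eta>. 0 < l \<and> l < 1 \<and> 0 < \<eta> \<and> 1 < sqrt (\<alpha> * l) \<and>
     (\<forall>\<Delta>. D2 \<le> \<Delta> \<longrightarrow> sqrt c * (\<Delta> + \<eta>) \<le> (sqrt (\<alpha> * l) - 1) * \<Delta>)"
proof -
  define r where "r = sqrt (sqrt (1 - \<epsilon>))"
  define sa where "sa = sqrt \<alpha>"
  have r: "0 < r" "r < 1" unfolding r_def using e by auto
  have sa: "1 < sa" unfolding sa_def using a by simp
  have sa2: "sa * sa = \<alpha>" unfolding sa_def using a by simp
  define l where "l = ((1 + r * (sa - 1)) / sa)\<^sup>2"
  define \<eta> where "\<eta> = D2 * (1 / r - 1)"
  have q1: "1 < 1 + r * (sa - 1)" using r sa by simp
  have "r * (sa - 1) < 1 * (sa - 1)" using r sa by (intro mult_strict_right_mono) auto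
  then have q: "1 < 1 + r * (sa - 1)" "1 + r * (sa - 1) < sa" using q1 by auto
  have sl: "sqrt (\<alpha> * l) = 1 + r * (sa - 1)"
  proof -
    have "\<alpha> * l = (sa * sa) * ((1 + r * (sa - 1)) / sa)\<^sup>2" unfolding l_def sa2 ..
    also have "\<dots> = (1 + r * (sa - 1))\<^sup>2" using sa
      by (simp add: power2_eq_square)
    finally have "\<alpha> * l = (1 + r * (sa - 1))\<^sup>2" .
    then show ?thesis using q by simp
  qed
  have sc: "sqrt c = r * r * (sa - 1)"
  proof -
    have "c = (r * r * (sa - 1))\<^sup>2"
    proof -
      have rr: "r * r = sqrt (1 - \<epsilon>)" unfolding r_def using e by (simp add: real_sqrt_mult_self)
      have "sqrt (1 - \<epsilon>) * sqrt (1 - \<epsilon>) = 1 - \<epsilon>" using e by (simp add: real_sqrt_mult_self)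
      then have A: "r * r * (r * r) = 1 - \<epsilon>" using rr by simp
      have B: "\<alpha> * (1 - 1 / sqrt \<alpha>)\<^sup>2 = (sa - 1)\<^sup>2"
      proof -
        have "1 - 1 / sqrt \<alpha> = (sa - 1) / sa" using sa unfolding sa_def[symmetric] by (simp add: field_simps)
        then have "\<alpha> * (1 - 1 / sqrt \<alpha>)\<^sup>2 = (sa * sa) * ((sa - 1) / sa)\<^sup>2" using sa2 by simp
        also have "\<dots> = (sa - 1)\<^sup>2" using sa by (simp add: power2_eq_square)
        finally show ?thesis .
      qed
      have "c = (1 - \<epsilon>) * (\<alpha> * (1 - 1 / sqrt \<alpha>)\<^sup>2)" unfolding c_def by (simp only: mult.assoc)
      also have "\<dots> = (r * r * (r * r)) * (sa - 1)\<^sup>2" by (simp only: A[symmetric] B)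
      also have "\<dots> = (r * r * (sa - 1))\<^sup>2" by (simp add: power2_eq_square mult_ac)
      finally show ?thesis .
    qed
    then show ?thesis using r sa by simp
  qed
  have "0 < l" unfolding l_def using q by simp
  moreover have "l < 1"
  proof -
    have "(1 + r * (sa - 1)) / sa < 1" using q sa by simp
    moreover have "0 < (1 + r * (sa - 1)) / sa" using q sa by simp
    ultimately show ?thesis unfolding l_def by (simp add: power_less_one_iff)
  qed
  moreover have "0 < \<eta>" unfolding \<eta>_def using r D2 by simp
  moreover have "1 < sqrt (\<alpha> * l)" using sl q by simp
  moreover have "\<forall>\<Delta>. D2 \<le> \<Delta> \<longrightarrow> sqrt c * (\<Delta> + \<eta>) \<le> (sqrt (\<alpha> * l) - 1) * \<Delta>"
  proof (intro allI impI)
    fix \<Delta> assume d: "D2 \<le> \<Delta>"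
    have "r * \<eta> = D2 * (1 - r)" unfolding \<eta>_def using r by (simp add: field_simps)
    also have "\<dots> \<le> \<Delta> * (1 - r)" using d r by (intro mult_right_mono) auto
    finally have "r * (\<Delta> + \<eta>) \<le> \<Delta>" by (simp add: algebra_simps)
    then have "(r * (sa - 1)) * (r * (\<Delta> + \<eta>)) \<le> (r * (sa - 1)) * \<Delta>"
      using r sa by (intro mult_left_mono) auto
    then show "sqrt c * (\<Delta> + \<eta>) \<le> (sqrt (\<alpha> * l) - 1) * \<Delta>"
      unfolding sc sl by (simp add: algebra_simps)
  qed
  ultimately show ?thesis by blast
qed


lemma aux_frac: "(d::real) \<noteq> 0 \<Longrightarrow> x * (1 / d) = d * (x / d\<^sup>2)"
  by (simp add: power2_eq_square)

context bandit begin

lemma cardW_lim: "filterlim (\<lambda>T. card {phase_of \<beta> T div 2 + 1 .. phase_of \<beta> T - 2}) at_top at_top"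
proof -
  have f: "filterlim (\<lambda>J::nat. J - 2 - J div 2) at_top at_top"
    unfolding filterlim_at_top
  proof
    fix z :: nat
    show "eventually (\<lambda>J. z \<le> J - 2 - J div 2) at_top"
      using eventually_ge_at_top[of "2*z+4"] by eventually_elim presburger
  qed
  have "filterlim (\<lambda>T. phase_of \<beta> T - 2 - phase_of \<beta> T div 2) at_top at_top"
    by (rule filterlim_compose[OF f phase_of_tendsto]) (use beta in simp)
  moreover have "\<And>T. card {phase_of \<beta> T div 2 + 1 .. phase_of \<beta> T - 2} = phase_of \<beta> T - 2 - phase_of \<beta> T div 2"
    by simp
  ultimately show ?thesis by simp
qed

lemma regret_meas: "regret \<mu> I i T \<in> borel_measurable M"
proof -
  have mu_m: "\<mu> \<in> measurable (count_space UNIV) borel" by simp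
  have c: "\<And>t. (\<lambda>\<omega>. \<mu> (I i t \<omega>)) \<in> borel_measurable M"
    using measurable_compose[OF I_meas[rule_format] mu_m] .
  have "\<And>t. (\<lambda>\<omega>. \<mu> 1 - \<mu> (I i t \<omega>)) \<in> borel_measurable M"
  proof -
    fix t
    show "(\<lambda>\<omega>. \<mu> 1 - \<mu> (I i t \<omega>)) \<in> borel_measurable M"
      using borel_measurable_diff[of "\<lambda>_. \<mu> 1" M "\<lambda>\<omega>. \<mu> (I i t \<omega>)"] c[of t] by simp
  qed
  then show ?thesis unfolding regret_def[abs_def] by (rule borel_measurable_sum)
qed

lemma main_good:
  fixes \<epsilon> :: real
  assumes e: "0 < \<epsilon>" "\<epsilon> < 1"
  defines "c \<equiv> (1 - \<epsilon>) * \<alpha> * (1 - 1 / sqrt \<alpha>)\<^sup>2"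
  shows "\<exists>Gd. (\<forall>T. Gd T \<in> events) \<and> (\<lambda>T. prob (Gd T)) \<longlonglongrightarrow> 1 \<and>
     eventually (\<lambda>T. \<forall>\<omega>\<in>Gd T. G \<omega> \<and> c * ln (real T) * (\<Sum>k=2..K. 1 / (\<mu> 1 - \<mu> k)) \<le> regret \<mu> I i T \<omega>) sequentially"
proof -
  define D2 where "D2 = \<mu> 1 - \<mu> 2"
  have D2: "0 < D2" unfolding D2_def using mu_gap by simp
  obtain l \<eta> where l: "0 < l" "l < 1" and \<eta>: "0 < \<eta>" and sl: "1 < sqrt (\<alpha> * l)"
    and par: "\<And>\<Delta>. D2 \<le> \<Delta> \<Longrightarrow> sqrt c * (\<Delta> + \<eta>) \<le> (sqrt (\<alpha> * l) - 1) * \<Delta>"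
    using params[OF alpha e D2] unfolding c_def by blast
  have c0: "0 < c"
  proof -
    have "1 < sqrt \<alpha>" using alpha by simp
    then have "1 / sqrt \<alpha> < 1" by simp
    then have "0 < (1 - 1 / sqrt \<alpha>)\<^sup>2" using alpha by simp
    then show ?thesis unfolding c_def using e alpha by simp
  qed
  define Cst where "Cst = 4 * \<alpha> / \<eta>\<^sup>2"
  define N0 where "N0 = (\<lambda>T::nat. nat \<lceil>Cst * ln (real T)\<rceil>)"
  define W where "W = (\<lambda>T::nat. {phase_of \<beta> T div 2 + 1 .. phase_of \<beta> T - 2})"
  obtain N where GN: "\<And>\<omega>. \<omega> \<in> space M - N \<Longrightarrow> G \<omega>" and N: "N \<in> null_sets M"
    using AE_E3[OF AE_G] by blast
  define p where "p = 1 / (real n * real K)"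
  define Rec where "Rec = (\<lambda>k T. {\<omega>\<in>space M. \<exists>j\<in>W T. Z (Hsel i j) \<omega> = n+1 \<and> Z (Mal i j) \<omega> = k})"
  define Low where "Low = (\<lambda>k T. {\<omega>\<in>space M. \<forall>m\<in>{1..T}. \<mu> k - sqrt (ln (real T) / real m) < avg i k m \<omega>})"
  define Up where "Up = (\<lambda>a T. {\<omega>\<in>space M. \<forall>m\<in>{N0 T..T}. avg i a m \<omega> < \<mu> a + \<eta> / 2})"
  define Gd where "Gd = (\<lambda>T. (space M - N) \<inter> (\<Inter>k\<in>{2..K}. Rec k T) \<inter> (\<Inter>k\<in>{2..K}. Low k T) \<inter> (\<Inter>a\<in>{1..K}. Up a T))"
  have W1: "\<And>T j. j \<in> W T \<Longrightarrow> 1 \<le> j" unfolding W_def by auto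
  have finW: "\<And>T. finite (W T)" unfolding W_def by simp
  have Rec_m: "\<And>k T. Rec k T \<in> events"
  proof -
    fix k T
    have "Rec k T = (\<Union>j\<in>W T. {\<omega>\<in>space M. Z (Hsel i j) \<omega> = n+1 \<and> Z (Mal i j) \<omega> = k})"
      unfolding Rec_def by auto
    moreover have "\<And>j. j \<in> W T \<Longrightarrow> {\<omega>\<in>space M. Z (Hsel i j) \<omega> = n+1 \<and> Z (Mal i j) \<omega> = k} \<in> events"
    proof -
      fix j assume "j \<in> W T"
      then have j1: "1 \<le> j" by (rule W1)
      note [measurable] = Z_meas[OF Hsel_idx[OF i j1]] Z_meas[OF Mal_idx[OF i j1]]
      show "{\<omega>\<in>space M. Z (Hsel i j) \<omega> = n+1 \<and> Z (Mal i j) \<omega> = k} \<in> events" by measurable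
    qed
    ultimately show "Rec k T \<in> events" using finW by (auto intro!: sets.finite_UN)
  qed
  have Low_m: "\<And>k T. k \<in> {1..K} \<Longrightarrow> Low k T \<in> events"
  proof -
    fix k T assume k: "k \<in> {1..K}"
    note [measurable] = avg_meas[OF i k]
    show "Low k T \<in> events" unfolding Low_def by measurable
  qed
  have Up_m: "\<And>a T. a \<in> {1..K} \<Longrightarrow> Up a T \<in> events"
  proof -
    fix a T assume a: "a \<in> {1..K}"
    note [measurable] = avg_meas[OF i a]
    show "Up a T \<in> events" unfolding Up_def by measurable
  qed
  have Gd_m: "\<And>T. Gd T \<in> events"
  proof -
    fix T
    have K2: "{2..K} \<noteq> {}" "{1..K} \<noteq> {}" using K by auto
    have "(\<Inter>k\<in>{2..K}. Rec k T) \<in> events" using K2 Rec_m by (intro sets.finite_INT) auto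
    moreover have "(\<Inter>k\<in>{2..K}. Low k T) \<in> events" using K2 Low_m by (intro sets.finite_INT) auto
    moreover have "(\<Inter>a\<in>{1..K}. Up a T) \<in> events" using K2 Up_m by (intro sets.finite_INT) auto
    moreover have "space M - N \<in> events" using N by auto
    ultimately show "Gd T \<in> events" unfolding Gd_def by auto
  qed
  have p: "0 < p" "p < 1"
  proof -
    have "2 \<le> real n * real K" using n K
      by (metis mult_le_mono of_nat_le_iff of_nat_mult mult_1 numeral_le_iff of_nat_numeral)
    then show "0 < p" "p < 1" unfolding p_def by auto
  qed
  have N0_props: "\<And>T. 3 \<le> T \<Longrightarrow> 1 \<le> N0 T \<and> 4 * \<alpha> * ln (real T) / \<eta>\<^sup>2 \<le> real (N0 T) \<and> real (N0 T) \<le> Cst * ln (real T) + 1"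
  proof -
    fix T :: nat assume T: "3 \<le> T"
    have lnT: "0 < ln (real T)" using T by simp
    have Cp: "0 < Cst" unfolding Cst_def using alpha \<eta> by simp
    have x: "0 < Cst * ln (real T)" using Cp lnT by simp
    have "4 * \<alpha> * ln (real T) / \<eta>\<^sup>2 = Cst * ln (real T)" unfolding Cst_def by simp
    moreover have "Cst * ln (real T) \<le> real (N0 T)" unfolding N0_def using x
      by (metis le_of_int_ceiling of_nat_nat order.trans ceiling_le_zero le_nat_iff nat_le_iff of_nat_0_le_iff not_le order_le_less of_int_of_nat_eq)
    moreover have "real (N0 T) \<le> Cst * ln (real T) + 1" unfolding N0_def using x ceiling_correct[of "Cst * ln (real T)"]
      by (simp add: of_nat_nat)
    moreover have "1 \<le> N0 T" unfolding N0_def using x by (simp add: Suc_le_eq)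
    ultimately show "1 \<le> N0 T \<and> 4 * \<alpha> * ln (real T) / \<eta>\<^sup>2 \<le> real (N0 T) \<and> real (N0 T) \<le> Cst * ln (real T) + 1"
      by simp
  qed
  have bound: "\<And>T. 3 \<le> T \<Longrightarrow> 1 - (real K * (1 - p) ^ card (W T) + 2 * real K / real T) \<le> prob (Gd T)"
  proof -
    fix T :: nat assume T: "3 \<le> T"
    have T1: "1 \<le> T" using T by simp
    define U1 where "U1 = (\<Union>k\<in>{2..K}. space M - Rec k T)"
    define U2 where "U2 = (\<Union>k\<in>{2..K}. space M - Low k T)"
    define U3 where "U3 = (\<Union>a\<in>{1..K}. space M - Up a T)"
    have U1m: "U1 \<in> events" unfolding U1_def
      by (rule sets.finite_UN) (auto intro!: sets.compl_sets Rec_m)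
    have U2m: "U2 \<in> events" unfolding U2_def
      by (rule sets.finite_UN) (auto intro!: sets.compl_sets Low_m)
    have U3m: "U3 \<in> events" unfolding U3_def
      by (rule sets.finite_UN) (auto intro!: sets.compl_sets Up_m)
    have sub: "space M - Gd T \<subseteq> (U1 \<union> U2 \<union> U3) \<union> N"
      unfolding U1_def U2_def U3_def Gd_def by auto
    have "prob (space M - Gd T) \<le> prob ((U1 \<union> U2 \<union> U3) \<union> N)"
      using U1m U2m U3m N by (intro finite_measure_mono[OF sub]) auto
    also have "\<dots> = prob (U1 \<union> U2 \<union> U3)" using U1m U2m U3m N by (intro measure_Un_null_set) auto
    also have "\<dots> \<le> prob (U1 \<union> U2) + prob U3" using U1m U2m U3m by (intro measure_Un_le) auto
    also have "prob (U1 \<union> U2) \<le> prob U1 + prob U2" using U1m U2m by (intro measure_Un_le) auto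
    also have "prob U1 \<le> real K * (1 - p) ^ card (W T)"
    proof -
      have "prob U1 \<le> (\<Sum>k\<in>{2..K}. prob (space M - Rec k T))"
        unfolding U1_def using Rec_m by (intro finite_measure_subadditive_finite) auto
      also have "\<dots> = (\<Sum>k\<in>{2..K}. (1 - p) ^ card (W T))"
      proof (rule sum.cong[OF refl])
        fix k assume k: "k \<in> {2..K}"
        have "space M - Rec k T = {\<omega>\<in>space M. \<forall>j\<in>W T. \<not> (Z (Hsel i j) \<omega> = n+1 \<and> Z (Mal i j) \<omega> = k)}"
          unfolding Rec_def by auto
        then show "prob (space M - Rec k T) = (1 - p) ^ card (W T)"
          unfolding p_def using rec_prob[of k "W T"] k finW W1 by auto
      qed
      also have "\<dots> \<le> real K * (1 - p) ^ card (W T)"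
        using p by (simp add: mult_right_mono)
      finally show ?thesis .
    qed
    also have "prob U2 \<le> real K / real T"
    proof -
      have "prob U2 \<le> (\<Sum>k\<in>{2..K}. prob (space M - Low k T))"
        unfolding U2_def using Low_m by (intro finite_measure_subadditive_finite) auto
      also have "\<dots> \<le> (\<Sum>k\<in>{2..K}. 1 / real T)"
      proof (rule sum_mono)
        fix k assume k: "k \<in> {2..K}"
        have "space M - Low k T = {\<omega>\<in>space M. \<not> (\<forall>m\<in>{1..T}. \<mu> k - sqrt (ln (real T) / real m) < avg i k m \<omega>)}"
          unfolding Low_def by auto
        then show "prob (space M - Low k T) \<le> 1 / real T" using low_bad[of k T] k T1 by auto
      qed
      also have "\<dots> \<le> real K / real T" using K T1 by (simp add: divide_right_mono)
      finally show ?thesis .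
    qed
    also have "prob U3 \<le> real K / real T"
    proof -
      have "prob U3 \<le> (\<Sum>a\<in>{1..K}. prob (space M - Up a T))"
        unfolding U3_def using Up_m by (intro finite_measure_subadditive_finite) auto
      also have "\<dots> \<le> (\<Sum>a\<in>{1..K}. 1 / real T)"
      proof (rule sum_mono)
        fix a assume a: "a \<in> {1..K}"
        have "space M - Up a T = {\<omega>\<in>space M. \<not> (\<forall>m\<in>{N0 T..T}. avg i a m \<omega> < \<mu> a + \<eta> / 2)}"
          unfolding Up_def by auto
        then show "prob (space M - Up a T) \<le> 1 / real T"
          using up_bad[of a T "N0 T" \<eta>] a T1 N0_props[OF T] \<eta> by auto
      qed
      also have "\<dots> = real K / real T" by simp
      finally show ?thesis .
    qed
    finally have "prob (space M - Gd T) \<le> real K * (1 - p) ^ card (W T) + 2 * real K / real T"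
      by simp
    then show "1 - (real K * (1 - p) ^ card (W T) + 2 * real K / real T) \<le> prob (Gd T)"
      using prob_compl[OF Gd_m[of T]] by linarith
  qed
  have prob_lim: "(\<lambda>T. prob (Gd T)) \<longlonglongrightarrow> 1"
  proof (rule tendsto_sandwich)
    show "eventually (\<lambda>T. 1 - (real K * (1 - p) ^ card (W T) + 2 * real K / real T) \<le> prob (Gd T)) sequentially"
      using eventually_ge_at_top[of 3] by eventually_elim (rule bound)
    show "eventually (\<lambda>T. prob (Gd T) \<le> 1) sequentially" by simp
    show "(\<lambda>T. 1) \<longlonglongrightarrow> (1::real)" by simp
    have l1: "(\<lambda>T. (1 - p) ^ card (W T)) \<longlonglongrightarrow> 0"
      unfolding W_def using p by (intro filterlim_compose[OF LIMSEQ_power_zero cardW_lim]) auto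
    have l2: "(\<lambda>T. 2 * real K / real T) \<longlonglongrightarrow> 0" by (rule lim_const_over_n)
    have "(\<lambda>T. 1 - (real K * (1 - p) ^ card (W T) + 2 * real K / real T)) \<longlonglongrightarrow> 1 - (real K * 0 + 0)"
      by (intro tendsto_intros l1 l2)
    then show "(\<lambda>T. 1 - (real K * (1 - p) ^ card (W T) + 2 * real K / real T)) \<longlonglongrightarrow> 1" by simp
  qed
  have ev: "eventually (\<lambda>T. \<forall>\<omega>\<in>Gd T. G \<omega> \<and> c * ln (real T) * (\<Sum>k=2..K. 1 / (\<mu> 1 - \<mu> k)) \<le> regret \<mu> I i T \<omega>) sequentially"
  proof -
    define D where "D = c / D2\<^sup>2 + real K * Cst"
    define D' where "D' = real K + 1"
    have Cp: "0 < Cst" unfolding Cst_def using alpha \<eta> by simp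
    have D0: "0 \<le> D" unfolding D_def using c0 Cp by simp
    have evJ: "eventually (\<lambda>J::nat. 4 \<le> J \<and> l * (ln 2 + \<beta> * ln (real J)) \<le> \<beta> * (ln (real J) - ln 2) \<and>
        D * (ln 2 + \<beta> * ln (real J)) + D' \<le> (real J / 2) powr (\<beta> - 1) - 1) sequentially"
      using eventually_ge_at_top[of 4] asym1[OF beta l(2)] asym2[OF beta, of D D']
      by eventually_elim auto
    have b1: "1 \<le> \<beta>" using beta by simp
    have evT: "eventually (\<lambda>T. 4 \<le> phase_of \<beta> T \<and> l * (ln 2 + \<beta> * ln (real (phase_of \<beta> T))) \<le> \<beta> * (ln (real (phase_of \<beta> T)) - ln 2) \<and>
        D * (ln 2 + \<beta> * ln (real (phase_of \<beta> T))) + D' \<le> (real (phase_of \<beta> T) / 2) powr (\<beta> - 1) - 1) sequentially"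
      using filterlim_iff[THEN iffD1, OF phase_of_tendsto[OF b1], rule_format, OF evJ] .
    show ?thesis using evT eventually_ge_at_top[of 3]
    proof eventually_elim
      case (elim T)
      define J where "J = phase_of \<beta> T"
      have J4: "4 \<le> J" and hA1: "l * (ln 2 + \<beta> * ln (real J)) \<le> \<beta> * (ln (real J) - ln 2)"
        and hA2: "D * (ln 2 + \<beta> * ln (real J)) + D' \<le> (real J / 2) powr (\<beta> - 1) - 1"
        using elim unfolding J_def by auto
      have T3: "3 \<le> T" using elim by simp
      have T1: "1 \<le> T" using T3 by simp
      have TJ: "T \<le> phase_end \<beta> J" "phase_end \<beta> (J - 1) < T"
        using phase_of_props[OF b1 T1] unfolding J_def by auto
      have lnT: "0 < ln (real T)" using T3 by simp
      have N0p: "1 \<le> N0 T" "4 * \<alpha> * ln (real T) / \<eta>\<^sup>2 \<le> real (N0 T)" "real (N0 T) \<le> Cst * ln (real T) + 1"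
        using N0_props[OF T3] by auto
      have N0b: "\<alpha> * ln (real T) / real (N0 T) \<le> (\<eta> / 2)\<^sup>2"
      proof -
        have e2: "0 < \<eta>\<^sup>2" using \<eta> by simp
        have "4 * \<alpha> * ln (real T) \<le> real (N0 T) * \<eta>\<^sup>2"
          using N0p(2) by (simp add: pos_divide_le_eq[OF e2])
        moreover have "(\<eta> / 2)\<^sup>2 * real (N0 T) = real (N0 T) * \<eta>\<^sup>2 / 4" by (simp add: power2_eq_square)
        ultimately have "\<alpha> * ln (real T) \<le> (\<eta> / 2)\<^sup>2 * real (N0 T)" by linarith
        moreover have "0 < real (N0 T)" using N0p(1) by simp
        ultimately show ?thesis by (simp add: pos_divide_le_eq)
      qed
      show ?case
      proof
        fix \<omega> assume \<omega>: "\<omega> \<in> Gd T"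
        have \<omega>s: "\<omega> \<in> space M" and G\<omega>: "G \<omega>" using \<omega> GN unfolding Gd_def by auto
        have up: "\<forall>a\<in>{1..K}. \<forall>m\<in>{N0 T..T}. avg i a m \<omega> < \<mu> a + \<eta> / 2"
          using \<omega> unfolding Gd_def Up_def by auto
        have pk: "\<And>k. k \<in> {2..K} \<Longrightarrow> c * ln (real T) / (\<mu> 1 - \<mu> k)\<^sup>2 \<le> real (pulls I i k T \<omega>)"
        proof -
          fix k assume k: "k \<in> {2..K}"
          have "\<omega> \<in> Rec k T" using \<omega> k unfolding Gd_def by auto
          then obtain j where jW: "j \<in> W T" and rec: "Z (Hsel i j) \<omega> = n+1" "Z (Mal i j) \<omega> = k"
            unfolding Rec_def by auto
          have low: "\<forall>m\<in>{1..T}. \<mu> k - sqrt (ln (real T) / real m) < avg i k m \<omega>"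
            using \<omega> k unfolding Gd_def Low_def by auto
          have jb: "J div 2 + 1 \<le> j" "j \<le> J - 2" using jW unfolding W_def J_def by auto
          have j1: "1 \<le> j" and J2j: "J \<le> 2 * j" and jJ: "Suc j \<le> J - 1" using jb J4 by auto
          have jJ2: "real J / 2 \<le> real (Suc j)" using J2j by simp
          have Tj: "phase_end \<beta> (Suc j) \<le> T"
            using pe_mono[OF b1 jJ] TJ(2) by linarith
          have lt: "\<forall>t. phase_end \<beta> j < t \<longrightarrow> l * ln (real T) \<le> ln (real t)"
            using time_lemma[OF beta _ _ j1 J2j T1 TJ(1) _ hA1] l J4 by auto
          define \<Delta> where "\<Delta> = \<mu> 1 - \<mu> k"
          have D2\<Delta>: "D2 \<le> \<Delta>" unfolding \<Delta>_def D2_def using mu_le2[OF k] by simp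
          have card: "c * ln (real T) / \<Delta>\<^sup>2 + real K * real (N0 T) < real (phase_end \<beta> (Suc j) - phase_end \<beta> j)"
          proof -
            have "c * ln (real T) / \<Delta>\<^sup>2 \<le> c * ln (real T) / D2\<^sup>2"
              using D2\<Delta> D2 c0 lnT by (intro divide_left_mono power_mono mult_pos_pos) auto
            moreover have "real K * real (N0 T) \<le> real K * (Cst * ln (real T) + 1)"
              using N0p(3) by (intro mult_left_mono) auto
            moreover have "c * ln (real T) / D2\<^sup>2 + real K * (Cst * ln (real T) + 1) = D * ln (real T) + real K"
              unfolding D_def by (simp add: algebra_simps)
            moreover have "D * ln (real T) \<le> D * (ln 2 + \<beta> * ln (real J))"
              using lnT_le[OF beta _ T1 TJ(1)] J4 D0 by (intro mult_left_mono) auto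
            moreover have "(real J / 2) powr (\<beta> - 1) - 1 \<le> real (phase_end \<beta> (Suc j) - phase_end \<beta> j)"
              using len_lemma[OF beta jJ2] .
            ultimately show ?thesis using hA2 unfolding D'_def by linarith
          qed
          have parr: "sqrt c * (\<Delta> + \<eta>) \<le> (sqrt (\<alpha> * l) - 1) * \<Delta>" using par[OF D2\<Delta>] .
          show "c * ln (real T) / (\<mu> 1 - \<mu> k)\<^sup>2 \<le> real (pulls I i k T \<omega>)"
            using core[OF \<omega>s G\<omega> k j1 rec Tj low up N0p(1) N0b lt _ card[unfolded \<Delta>_def] parr[unfolded \<Delta>_def] sl c0 _ \<eta>]
              lnT l by auto
        qed
        have Irange: "\<forall>t\<in>{1..T}. I i t \<omega> \<in> {1..K}" using I_range[OF \<omega>s G\<omega> i] by auto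
        have "c * ln (real T) * (\<Sum>k=2..K. 1 / (\<mu> 1 - \<mu> k)) = (\<Sum>k=2..K. (\<mu> 1 - \<mu> k) * (c * ln (real T) / (\<mu> 1 - \<mu> k)\<^sup>2))"
        proof -
          have "\<And>k. k \<in> {2..K} \<Longrightarrow> c * ln (real T) * (1 / (\<mu> 1 - \<mu> k)) = (\<mu> 1 - \<mu> k) * (c * ln (real T) / (\<mu> 1 - \<mu> k)\<^sup>2)"
          proof -
            fix k assume k: "k \<in> {2..K}"
            have "0 < \<mu> 1 - \<mu> k" using mu_le2[OF k] mu_gap by simp
            then show "c * ln (real T) * (1 / (\<mu> 1 - \<mu> k)) = (\<mu> 1 - \<mu> k) * (c * ln (real T) / (\<mu> 1 - \<mu> k)\<^sup>2)"
              by (intro aux_frac) simp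
          qed
          then show ?thesis by (simp add: sum_distrib_left)
        qed
        also have "\<dots> \<le> (\<Sum>k=2..K. (\<mu> 1 - \<mu> k) * real (pulls I i k T \<omega>))"
        proof (rule sum_mono)
          fix k assume k: "k \<in> {2..K}"
          have "0 \<le> \<mu> 1 - \<mu> k" using mu_le2[OF k] mu_gap by simp
          then show "(\<mu> 1 - \<mu> k) * (c * ln (real T) / (\<mu> 1 - \<mu> k)\<^sup>2) \<le> (\<mu> 1 - \<mu> k) * real (pulls I i k T \<omega>)"
            using pk[OF k] by (rule mult_left_mono[rotated])
        qed
        also have "\<dots> = (\<Sum>k=1..K. (\<mu> 1 - \<mu> k) * real (pulls I i k T \<omega>))"
          using K by (subst sum.atLeast_Suc_atMost[of 1 K]) (auto simp: numeral_2_eq_2)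
        also have "\<dots> = regret \<mu> I i T \<omega>" using regret_decomp[of T I i \<omega> K \<mu>, OF Irange] by simp
        finally show "G \<omega> \<and> c * ln (real T) * (\<Sum>k=2..K. 1 / (\<mu> 1 - \<mu> k)) \<le> regret \<mu> I i T \<omega>"
          using G\<omega> by simp
      qed
    qed
  qed
  show ?thesis using Gd_m prob_lim ev by blast
qed

lemma regret_bounds:
  assumes \<omega>: "\<omega> \<in> space M" "G \<omega>"
  shows "0 \<le> regret \<mu> I i T \<omega>" "regret \<mu> I i T \<omega> \<le> real T"
proof -
  have t: "\<And>t. t \<in> {1..T} \<Longrightarrow> 0 \<le> \<mu> 1 - \<mu> (I i t \<omega>) \<and> \<mu> 1 - \<mu> (I i t \<omega>) \<le> 1"
  proof -
    fix t assume t: "t \<in> {1..T}"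
    have r: "I i t \<omega> \<in> {1..K}" using I_range[OF \<omega> i] t by auto
    have "0 < \<mu> (I i t \<omega>) \<and> \<mu> (I i t \<omega>) < 1" using mu_range r by blast
    moreover have "0 < \<mu> 1 \<and> \<mu> 1 < 1" using mu_range K by auto
    moreover have "\<mu> (I i t \<omega>) \<le> \<mu> 1" using mu_le1[OF r] .
    ultimately show "0 \<le> \<mu> 1 - \<mu> (I i t \<omega>) \<and> \<mu> 1 - \<mu> (I i t \<omega>) \<le> 1" by auto
  qed
  show "0 \<le> regret \<mu> I i T \<omega>" unfolding regret_def using t by (intro sum_nonneg) auto
  have "regret \<mu> I i T \<omega> \<le> (\<Sum>t=1..T. (1::real))" unfolding regret_def using t by (intro sum_mono) auto
  then show "regret \<mu> I i T \<omega> \<le> real T" by simp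
qed

lemma part1:
  "\<forall>\<epsilon>. 0 < \<epsilon> \<and> \<epsilon> < 1 \<longrightarrow>
     ((\<lambda>T. measure M {\<omega> \<in> space M. regret \<mu> I i T \<omega> / ln (real T) \<ge>
         (1 - \<epsilon>) * \<alpha> * (1 - 1 / sqrt \<alpha>)\<^sup>2 * (\<Sum>k = 2..K. 1 / (\<mu> 1 - \<mu> k))}) \<longlonglongrightarrow> 1)"
proof (intro allI impI)
  fix \<epsilon> :: real assume e: "0 < \<epsilon> \<and> \<epsilon> < 1"
  define c where "c = (1 - \<epsilon>) * \<alpha> * (1 - 1 / sqrt \<alpha>)\<^sup>2"
  define \<Sigma> where "\<Sigma> = (\<Sum>k = 2..K. 1 / (\<mu> 1 - \<mu> k))"
  obtain Gd where Gdm: "\<And>T. Gd T \<in> events" and lim: "(\<lambda>T. prob (Gd T)) \<longlonglongrightarrow> 1"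
    and ev: "eventually (\<lambda>T. \<forall>\<omega>\<in>Gd T. G \<omega> \<and> c * ln (real T) * \<Sigma> \<le> regret \<mu> I i T \<omega>) sequentially"
    using main_good[of \<epsilon>] e unfolding c_def \<Sigma>_def by blast
  define Tg where "Tg = (\<lambda>T. {\<omega> \<in> space M. regret \<mu> I i T \<omega> / ln (real T) \<ge> c * \<Sigma>})"
  have Tgm: "\<And>T. Tg T \<in> events"
  proof -
    fix T
    note [measurable] = regret_meas[of T]
    show "Tg T \<in> events" unfolding Tg_def by measurable
  qed
  have "(\<lambda>T. prob (Tg T)) \<longlonglongrightarrow> 1"
  proof (rule tendsto_sandwich[OF _ _ lim tendsto_const])
    show "eventually (\<lambda>T. prob (Tg T) \<le> 1) sequentially" by simp
    show "eventually (\<lambda>T. prob (Gd T) \<le> prob (Tg T)) sequentially"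
      using ev eventually_ge_at_top[of 3]
    proof eventually_elim
      case (elim T)
      have lnT: "0 < ln (real T)" using elim by simp
      have "Gd T \<subseteq> Tg T"
      proof
        fix \<omega> assume \<omega>: "\<omega> \<in> Gd T"
        then have "\<omega> \<in> space M" using sets.sets_into_space[OF Gdm[of T]] by auto
        moreover have "c * ln (real T) * \<Sigma> \<le> regret \<mu> I i T \<omega>" using elim \<omega> by auto
        then have "c * \<Sigma> \<le> regret \<mu> I i T \<omega> / ln (real T)"
          using lnT by (simp add: pos_le_divide_eq mult_ac)
        ultimately show "\<omega> \<in> Tg T" unfolding Tg_def by auto
      qed
      then show ?case using Tgm by (intro finite_measure_mono) auto
    qed
  qed
  then show "(\<lambda>T. measure M {\<omega> \<in> space M. regret \<mu> I i T \<omega> / ln (real T) \<ge>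
         (1 - \<epsilon>) * \<alpha> * (1 - 1 / sqrt \<alpha>)\<^sup>2 * (\<Sum>k = 2..K. 1 / (\<mu> 1 - \<mu> k))}) \<longlonglongrightarrow> 1"
    unfolding Tg_def c_def \<Sigma>_def .
qed

lemma part2:
  "liminf (\<lambda>T. ereal ((\<integral>\<omega>. regret \<mu> I i T \<omega> \<partial>M) / ln (real T)))
     \<ge> ereal (\<alpha> * (1 - 1 / sqrt \<alpha>)\<^sup>2 * (\<Sum>k = 2..K. 1 / (\<mu> 1 - \<mu> k)))"
proof -
  define \<Sigma> where "\<Sigma> = (\<Sum>k = 2..K. 1 / (\<mu> 1 - \<mu> k))"
  define X where "X = \<alpha> * (1 - 1 / sqrt \<alpha>)\<^sup>2 * \<Sigma>"
  have \<Sigma>0: "0 < \<Sigma>" unfolding \<Sigma>_def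
  proof (rule sum_pos)
    show "finite {2..K}" by simp
    show "{2..K} \<noteq> {}" using K by simp
    fix k assume k: "k \<in> {2..K}"
    show "0 < 1 / (\<mu> 1 - \<mu> k)" using mu_le2[OF k] mu_gap by simp
  qed
  have X0: "0 < X"
  proof -
    have "1 < sqrt \<alpha>" using alpha by simp
    then have "1 / sqrt \<alpha> < 1" by simp
    then have "0 < (1 - 1 / sqrt \<alpha>)\<^sup>2" using alpha by simp
    then show ?thesis unfolding X_def using alpha \<Sigma>0 by simp
  qed
  have integ: "\<And>T. integrable M (regret \<mu> I i T)"
  proof -
    fix T
    show "integrable M (regret \<mu> I i T)"
    proof (rule Bochner_Integration.integrable_bound[where f="\<lambda>_. real T"])
      show "integrable M (\<lambda>_. real T)" by simp
      show "regret \<mu> I i T \<in> borel_measurable M" by (rule regret_meas)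
      show "AE \<omega> in M. norm (regret \<mu> I i T \<omega>) \<le> norm (real T)"
        using AE_G AE_space
      proof eventually_elim
        case (elim \<omega>)
        then show ?case using regret_bounds[of \<omega> T] by simp
      qed
    qed
  qed
  have Xeq: "\<alpha> * (1 - 1 / sqrt \<alpha>)\<^sup>2 * (\<Sum>k = 2..K. 1 / (\<mu> 1 - \<mu> k)) = X"
    unfolding X_def \<Sigma>_def ..
  show ?thesis
    unfolding le_Liminf_iff Xeq
  proof (intro allI impI)
    fix y assume y: "y < ereal X"
    show "eventually (\<lambda>T. y < ereal ((\<integral>\<omega>. regret \<mu> I i T \<omega> \<partial>M) / ln (real T))) sequentially"
    proof (cases y)
      case MInf
      then show ?thesis by simp
    next
      case PInf
      then show ?thesis using y by simp
    next
      case (real y0)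
      then have y0: "y0 < X" using y by simp
      define q where "q = max 0 (y0 / X)"
      have q12: "0 \<le> q" "q < 1" unfolding q_def using y0 X0 by (auto simp: field_simps)
      have "y0 / X \<le> q" unfolding q_def by simp
      then have "y0 / X * X \<le> q * X" using X0 by (intro mult_right_mono) auto
      then have "y0 \<le> q * X" using X0 by simp
      note q = q12 this
      define \<epsilon> where "\<epsilon> = (1 - q) / 4"
      have e: "0 < \<epsilon>" "\<epsilon> < 1" unfolding \<epsilon>_def using q by auto
      have key: "y0 < (1 - \<epsilon>) * X * (1 - \<epsilon>)"
      proof -
        have "(1 + q) / 2 \<le> (1 - \<epsilon>) * (1 - \<epsilon>)"
        proof -
          have "(1 - \<epsilon>) * (1 - \<epsilon>) = 1 - 2 * \<epsilon> + \<epsilon> * \<epsilon>" by (simp add: algebra_simps)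
          moreover have "0 \<le> \<epsilon> * \<epsilon>" by simp
          moreover have "1 - 2 * \<epsilon> = (1 + q) / 2" unfolding \<epsilon>_def by (simp add: field_simps)
          ultimately show ?thesis by linarith
        qed
        then have "(1 + q) / 2 * X \<le> (1 - \<epsilon>) * (1 - \<epsilon>) * X" using X0 by (intro mult_right_mono) auto
        moreover have "q * X < (1 + q) / 2 * X" using q X0 by (intro mult_strict_right_mono) auto
        moreover have "(1 - \<epsilon>) * X * (1 - \<epsilon>) = (1 - \<epsilon>) * (1 - \<epsilon>) * X" by (simp add: mult_ac)
        ultimately show ?thesis using q(3) by linarith
      qed
      define c where "c = (1 - \<epsilon>) * \<alpha> * (1 - 1 / sqrt \<alpha>)\<^sup>2"
      have cX: "c * \<Sigma> = (1 - \<epsilon>) * X" unfolding c_def X_def by (simp add: mult_ac)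
      have cX0: "0 \<le> c * \<Sigma>" using cX e X0 by simp
      obtain Gd where Gdm: "\<And>T. Gd T \<in> events" and lim: "(\<lambda>T. prob (Gd T)) \<longlonglongrightarrow> 1"
        and ev: "eventually (\<lambda>T. \<forall>\<omega>\<in>Gd T. G \<omega> \<and> c * ln (real T) * \<Sigma> \<le> regret \<mu> I i T \<omega>) sequentially"
        using main_good[OF e] unfolding c_def \<Sigma>_def by blast
      have ev1: "eventually (\<lambda>T. 1 - \<epsilon> < prob (Gd T)) sequentially"
        using order_tendstoD(1)[OF lim] e by simp
      show ?thesis
        using ev ev1 eventually_ge_at_top[of 3]
      proof eventually_elim
        case (elim T)
        note el = elim
        have lnT: "0 < ln (real T)" using elim by simp
        define C where "C = c * ln (real T) * \<Sigma>"
        have C0: "0 \<le> C"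
        proof -
          have "0 \<le> c * \<Sigma> * ln (real T)" using cX0 lnT by simp
          then show ?thesis unfolding C_def by (simp add: mult_ac)
        qed
        have "(\<integral>\<omega>. C * indicator (Gd T) \<omega> \<partial>M) \<le> (\<integral>\<omega>. regret \<mu> I i T \<omega> \<partial>M)"
        proof (rule integral_mono_AE)
          show "integrable M (\<lambda>\<omega>. C * indicator (Gd T) \<omega>)"
            using Gdm by (intro integrable_mult_right integrable_real_indicator) (auto simp: less_top[symmetric])
          show "integrable M (regret \<mu> I i T)" by (rule integ)
          show "AE \<omega> in M. C * indicator (Gd T) \<omega> \<le> regret \<mu> I i T \<omega>"
            using AE_G AE_space
          proof eventually_elim
            case (elim \<omega>)
            show ?case
            proof (cases "\<omega> \<in> Gd T")
              case True
              then show ?thesis using el unfolding C_def by auto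
            next
              case False
              then show ?thesis using regret_bounds[of \<omega> T] elim by simp
            qed
          qed
        qed
        moreover have "(\<integral>\<omega>. C * indicator (Gd T) \<omega> \<partial>M) = C * prob (Gd T)"
        proof -
          have "Gd T \<inter> space M = Gd T" using sets.sets_into_space[OF Gdm[of T]] by auto
          then show ?thesis by simp
        qed
        ultimately have I1: "C * prob (Gd T) \<le> (\<integral>\<omega>. regret \<mu> I i T \<omega> \<partial>M)" by linarith
        have "y0 < (1 - \<epsilon>) * X * (1 - \<epsilon>)" by (fact key)
        also have "\<dots> \<le> (1 - \<epsilon>) * X * prob (Gd T)"
          using elim e X0 by (intro mult_left_mono) auto
        also have "\<dots> = C * prob (Gd T) / ln (real T)" unfolding C_def using lnT cX by simp
        also have "\<dots> \<le> (\<integral>\<omega>. regret \<mu> I i T \<omega> \<partial>M) / ln (real T)"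
          using I1 lnT by (intro divide_right_mono) auto
        finally show ?case using real by simp
      qed
    qed
  qed
qed

end

theorem theorem1:
  fixes M :: "'w measure"
    and K n Ssz :: nat
    and \<mu> :: "nat \<Rightarrow> real"
    and \<alpha> \<beta> :: real
    and Shat :: "nat \<Rightarrow> nat set"
    and U1 L1 :: "nat \<Rightarrow> nat"
    and Z :: "src \<Rightarrow> 'w \<Rightarrow> nat"
    and I :: "nat \<Rightarrow> nat \<Rightarrow> 'w \<Rightarrow> nat"
    and B U L :: "nat \<Rightarrow> nat \<Rightarrow> 'w \<Rightarrow> nat"
    and i :: nat
  defines "S \<equiv> (\<lambda>a j \<omega>. Shat a \<union> {U a j \<omega>, L a j \<omega>})"
    and "R \<equiv> (\<lambda>a j \<omega>. if Z (Hsel a j) \<omega> \<le> n then B (Z (Hsel a j) \<omega>) j \<omega>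
                      else Z (Mal a j) \<omega>)"
  assumes M: "prob_space M"
    and K: "2 \<le> K" and n: "1 \<le> n"
    and mu_range: "\<forall>k \<in> {1..K}. 0 < \<mu> k \<and> \<mu> k < 1"
    and mu_gap: "\<mu> 1 > \<mu> 2"
    and mu_sorted: "\<forall>k. 2 \<le> k \<and> k < K \<longrightarrow> \<mu> (k + 1) \<le> \<mu> k"
    and alpha: "\<alpha> > 1" and beta: "\<beta> > 1"
    and Shat: "\<forall>a \<in> {1..n}. Shat a \<subseteq> {1..K} \<and> card (Shat a) = Ssz"
    and UL1: "\<forall>a \<in> {1..n}. U1 a \<in> {1..K} - Shat a \<and> L1 a \<in> {1..K} - Shat a \<and> U1 a \<noteq> L1 a"
    and best_sticky: "1 \<in> (\<Union>a \<in> {1..n}. Shat a)"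
    \<comment> \<open>independent random sources: rewards, agent selection, malicious samples\<close>
    and indep: "prob_space.indep_vars M (\<lambda>_. count_space UNIV) Z (src_idx n K)"
    and rew_distr: "\<forall>a \<in> {1..n}. \<forall>k \<in> {1..K}. \<forall>r \<ge> 1.
        distr M (count_space UNIV) (Z (Rew a k r)) = measure_pmf (bern01 (\<mu> k))"
    and H_distr: "\<forall>a \<in> {1..n}. \<forall>j \<ge> 1.
        distr M (count_space UNIV) (Z (Hsel a j)) = measure_pmf (pmf_of_set ({1..n+1} - {a}))"
    and mal_distr: "\<forall>a \<in> {1..n}. \<forall>j \<ge> 1.
        distr M (count_space UNIV) (Z (Mal a j)) = measure_pmf (pmf_of_set {1..K})"
    \<comment> \<open>the algorithm, run by every honest agent (no blocklist updates)\<close>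
    and I_meas: "\<forall>a t. I a t \<in> measurable M (count_space UNIV)"
    and I_ucb: "\<forall>a \<in> {1..n}. \<forall>t \<ge> 1. \<forall>\<omega> \<in> space M.
        I a t \<omega> \<in> S a (phase_of \<beta> t) \<omega> \<and>
        (\<forall>k \<in> S a (phase_of \<beta> t) \<omega>. ucb \<alpha> Z I a k t \<omega> \<le> ucb \<alpha> Z I a (I a t \<omega>) t \<omega>)"
    and B_def: "\<forall>a \<in> {1..n}. \<forall>j \<ge> 1. \<forall>\<omega> \<in> space M.
        B a j \<omega> \<in> S a j \<omega> \<and>
        (\<forall>k \<in> S a j \<omega>. phase_plays \<beta> I a k j \<omega> \<le> phase_plays \<beta> I a (B a j \<omega>) j \<omega>)"
    and UL_init: "\<forall>a \<in> {1..n}. \<forall>\<omega> \<in> space M. U a 1 \<omega> = U1 a \<and> L a 1 \<omega> = L1 a"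
    and UL_step: "\<forall>a \<in> {1..n}. \<forall>j \<ge> 1. \<forall>\<omega> \<in> space M.
        (R a j \<omega> \<in> S a j \<omega> \<longrightarrow> U a (j+1) \<omega> = U a j \<omega> \<and> L a (j+1) \<omega> = L a j \<omega>) \<and>
        (R a j \<omega> \<notin> S a j \<omega> \<longrightarrow>
           U a (j+1) \<omega> \<in> {U a j \<omega>, L a j \<omega>} \<and>
           (\<forall>k \<in> {U a j \<omega>, L a j \<omega>}. phase_plays \<beta> I a k j \<omega> \<le> phase_plays \<beta> I a (U a (j+1) \<omega>) j \<omega>) \<and>
           L a (j+1) \<omega> = R a j \<omega>)"
    and i: "i \<in> {1..n}"
  shows "(\<forall>\<epsilon>. 0 < \<epsilon> \<and> \<epsilon> < 1 \<longrightarrow>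
           ((\<lambda>T. measure M {\<omega> \<in> space M. regret \<mu> I i T \<omega> / ln (real T) \<ge>
               (1 - \<epsilon>) * \<alpha> * (1 - 1 / sqrt \<alpha>)\<^sup>2 * (\<Sum>k = 2..K. 1 / (\<mu> 1 - \<mu> k))})
            \<longlonglongrightarrow> 1))
       \<and> liminf (\<lambda>T. ereal ((\<integral>\<omega>. regret \<mu> I i T \<omega> \<partial>M) / ln (real T)))
           \<ge> ereal (\<alpha> * (1 - 1 / sqrt \<alpha>)\<^sup>2 * (\<Sum>k = 2..K. 1 / (\<mu> 1 - \<mu> k)))"
proof -
  interpret bandit M K n Ssz \<mu> \<alpha> \<beta> Shat U1 L1 Z I B U L i S R
  proof (rule bandit.intro)
    show "prob_space M" by (fact M)
    show "bandit_axioms M K n Ssz \<mu> \<alpha> \<beta> Shat U1 L1 Z I B U L i S R"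
      unfolding bandit_axioms_def
      using K n mu_range mu_gap mu_sorted alpha beta Shat UL1 indep rew_distr H_distr mal_distr
        I_meas I_ucb B_def UL_init UL_step i
      by (simp add: S_def R_def)
  qed
  show ?thesis using part1 part2 by blast
qed

end
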